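(* Let $A$ be a reduced commutative ring with finitely many minimal prime ideals, and let $A\subseteq B$ be an extension of rings which preserves non-zero-divisors, i.e. every non-zero-divisor of $A$ is a non-zero-divisor of $B$. Then there is an exact sequence of abelian groups $$0\longrightarrow \mathfrak{C}(A,B)\longrightarrow \mathfrak{C}(A)\longrightarrow \mathfrak{C}(B),$$ in which the map $\mathfrak{C}(A)\to\mathfrak{C}(B)$ is the one induced by the ring map $T(A)\to T(B)$, $a/s\mapsto a/s$ (via $L\mapsto$ the $B$-submodule of $T(B)$ generated by the image of $L$).
   Context: All rings are commutative with identity. For an extension of rings $R\subseteq S$ and $R$-submodules $L,L'$ of $S$, $LL'$ is the $R$-submodule of finite sums $\sum x_ky_k$, $x_k\in L$, $y_k\in L'$. An $R$-submodule $L$ of $S$ is an invertible ideal of $R\subseteq S$ if $LL'=R$ for some $R$-submodule $L'$ of $S$; these form an abelian group $\mathscr{G}(R,S)$ under multiplication and $\mathfrak{C}(R,S)=\mathscr{G}(R,S)/\{Rx: x\in S^\ast\}$. $T(R)$ denotes the total ring of fractions of $R$ (localization at the set of non-zero-divisors), and $\mathfrak{C}(R)=\mathfrak{C}(R,T(R))$. *)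

theory Defs
  imports "HOL-Algebra.Algebra"
begin

text \<open>S is a ring (HOL-Algebra record), R \<subseteq> carrier S a subring.\<close>

definition R_submod :: "('a,'m) ring_scheme \<Rightarrow> 'a set \<Rightarrow> 'a set \<Rightarrow> bool" where
  "R_submod S R L \<longleftrightarrow> L \<subseteq> carrier S \<and> \<zero>\<^bsub>S\<^esub> \<in> L \<and>
     (\<forall>x\<in>L. \<forall>y\<in>L. x \<oplus>\<^bsub>S\<^esub> y \<in> L) \<and> (\<forall>r\<in>R. \<forall>x\<in>L. r \<otimes>\<^bsub>S\<^esub> x \<in> L)"

definition submod_prod :: "('a,'m) ring_scheme \<Rightarrow> 'a set \<Rightarrow> 'a set \<Rightarrow> 'a set" where
  "submod_prod S L L' = {z. \<exists>(n::nat) f g. (\<forall>i<n. f i \<in> L \<and> g i \<in> L') \<and>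
        z = finsum S (\<lambda>i. f i \<otimes>\<^bsub>S\<^esub> g i) {..<n}}"

definition invertible_ideal :: "('a,'m) ring_scheme \<Rightarrow> 'a set \<Rightarrow> 'a set \<Rightarrow> bool" where
  "invertible_ideal S R L \<longleftrightarrow> R_submod S R L \<and>
     (\<exists>L'. R_submod S R L' \<and> submod_prod S L L' = R)"

definition Inv_group :: "('a,'m) ring_scheme \<Rightarrow> 'a set \<Rightarrow> 'a set monoid" where
  "Inv_group S R = \<lparr>carrier = {L. invertible_ideal S R L}, monoid.mult = submod_prod S, one = R\<rparr>"

definition principal_ideals :: "('a,'m) ring_scheme \<Rightarrow> 'a set \<Rightarrow> 'a set set" where
  "principal_ideals S R = {{r \<otimes>\<^bsub>S\<^esub> x | r. r \<in> R} | x. x \<in> Units S}"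

text \<open>\<C>(R,S) = \<G>(R,S) / {Rx : x \<in> S*}.\<close>
definition Cart_group :: "('a,'m) ring_scheme \<Rightarrow> 'a set \<Rightarrow> 'a set set monoid" where
  "Cart_group S R = Inv_group S R Mod principal_ideals S R"

definition nzd :: "('a,'m) ring_scheme \<Rightarrow> 'a \<Rightarrow> bool" where
  "nzd R s \<longleftrightarrow> s \<in> carrier R \<and> (\<forall>x\<in>carrier R. s \<otimes>\<^bsub>R\<^esub> x = \<zero>\<^bsub>R\<^esub> \<longrightarrow> x = \<zero>\<^bsub>R\<^esub>)"

definition frac_rel :: "('a,'m) ring_scheme \<Rightarrow> (('a \<times> 'a) \<times> ('a \<times> 'a)) set" where
  "frac_rel R = {((a,s),(b,t)). a \<in> carrier R \<and> b \<in> carrier R \<and> nzd R s \<and> nzd R t \<and>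
       a \<otimes>\<^bsub>R\<^esub> t = b \<otimes>\<^bsub>R\<^esub> s}"

definition frac :: "('a,'m) ring_scheme \<Rightarrow> 'a \<Rightarrow> 'a \<Rightarrow> ('a \<times> 'a) set" where
  "frac R a s = frac_rel R `` {(a,s)}"

definition Tot :: "('a,'m) ring_scheme \<Rightarrow> ('a \<times> 'a) set ring" where
  "Tot R = \<lparr>carrier = {frac R a s | a s. a \<in> carrier R \<and> nzd R s},
     monoid.mult = (\<lambda>x y. \<Union>{frac R (a \<otimes>\<^bsub>R\<^esub> b) (s \<otimes>\<^bsub>R\<^esub> t) | a s b t. (a,s) \<in> x \<and> (b,t) \<in> y}),
     one = frac R \<one>\<^bsub>R\<^esub> \<one>\<^bsub>R\<^esub>,
     ring.zero = frac R \<zero>\<^bsub>R\<^esub> \<one>\<^bsub>R\<^esub>,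
     ring.add = (\<lambda>x y. \<Union>{frac R (a \<otimes>\<^bsub>R\<^esub> t \<oplus>\<^bsub>R\<^esub> b \<otimes>\<^bsub>R\<^esub> s) (s \<otimes>\<^bsub>R\<^esub> t) | a s b t. (a,s) \<in> x \<and> (b,t) \<in> y})\<rparr>"

definition canon :: "('a,'m) ring_scheme \<Rightarrow> ('a \<times> 'a) set set" where
  "canon R = {frac R a \<one>\<^bsub>R\<^esub> | a. a \<in> carrier R}"

text \<open>\<C>(R) = \<C>(R, T(R)).\<close>
definition Cl :: "('a,'m) ring_scheme \<Rightarrow> ('a \<times> 'a) set set set monoid" where
  "Cl R = Cart_group (Tot R) (canon R)"

text \<open>T(A) \<rightarrow> T(B), a/s \<mapsto> a/s (A given as subring of carrier B, same operations).\<close>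
definition tot_map :: "('a,'m) ring_scheme \<Rightarrow> 'a set \<Rightarrow> ('a \<times> 'a) set \<Rightarrow> ('a \<times> 'a) set" where
  "tot_map B A x = \<Union>{frac B a s | a s. (a,s) \<in> x}"

definition gen_submod :: "('a,'m) ring_scheme \<Rightarrow> 'a set \<Rightarrow> 'a set \<Rightarrow> 'a set" where
  "gen_submod S R Z = Inter {M. R_submod S R M \<and> Z \<subseteq> M}"

definition ext_ideal :: "('a,'m) ring_scheme \<Rightarrow> 'a set \<Rightarrow> ('a \<times> 'a) set set \<Rightarrow> ('a \<times> 'a) set set" where
  "ext_ideal B A L = gen_submod (Tot B) (canon B) (tot_map B A ` L)"

definition Cl_map :: "('a,'m) ring_scheme \<Rightarrow> 'a set \<Rightarrow> ('a \<times> 'a) set set set \<Rightarrow> ('a \<times> 'a) set set set" where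
  "Cl_map B A K = principal_ideals (Tot B) (canon B) #>\<^bsub>Inv_group (Tot B) (canon B)\<^esub>
                     ext_ideal B A (SOME L. L \<in> K)"

definition reduced :: "('a,'m) ring_scheme \<Rightarrow> bool" where
  "reduced R \<longleftrightarrow> (\<forall>a\<in>carrier R. \<forall>n::nat. a [^]\<^bsub>R\<^esub> n = \<zero>\<^bsub>R\<^esub> \<longrightarrow> a = \<zero>\<^bsub>R\<^esub>)"

definition minimal_primes :: "('a,'m) ring_scheme \<Rightarrow> 'a set set" where
  "minimal_primes R = {P. primeideal P R \<and> (\<forall>Q. primeideal Q R \<and> Q \<subseteq> P \<longrightarrow> Q = P)}"

end

theory Submission
  imports Defs
begin

context cring
begin

lemma SP_cons:
  assumes "L \<subseteq> carrier R" "L' \<subseteq> carrier R" "x \<in> L" "y \<in> L'" "w \<in> submod_prod R L L'"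
  shows "x \<otimes> y \<oplus> w \<in> submod_prod R L L'"
proof -
  from assms(5) obtain n :: nat and f g where fg: "\<forall>i<n. f i \<in> L \<and> g i \<in> L'"
    and w: "w = finsum R (\<lambda>i. f i \<otimes> g i) {..<n}"
    unfolding submod_prod_def by blast
  define f' where "f' = f(n := x)"
  define g' where "g' = g(n := y)"
  have fg': "\<forall>i<Suc n. f' i \<in> L \<and> g' i \<in> L'" using fg assms(3,4)
    by (auto simp: f'_def g'_def less_Suc_eq)
  have "finsum R (\<lambda>i. f' i \<otimes> g' i) {..<Suc n} = f' n \<otimes> g' n \<oplus> finsum R (\<lambda>i. f' i \<otimes> g' i) {..<n}"
    unfolding lessThan_Suc
    apply (rule finsum_insert) using fg' assms(1,2) by (auto intro!: m_closed)
  also have "finsum R (\<lambda>i. f' i \<otimes> g' i) {..<n} = w" unfolding w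
    apply (rule finsum_cong') using fg assms(1,2) by (auto simp: f'_def g'_def intro!: m_closed)
  finally have "x \<otimes> y \<oplus> w = finsum R (\<lambda>i. f' i \<otimes> g' i) {..<Suc n}"
    by (simp add: f'_def g'_def)
  then show ?thesis using fg' unfolding submod_prod_def by blast
qed

lemma SP_zero: "\<zero> \<in> submod_prod R L L'"
  unfolding submod_prod_def by (rule CollectI, rule exI[of _ 0]) auto

lemma SP_induct [consumes 3, case_names zero step]:
  assumes "z \<in> submod_prod R L L'" "L \<subseteq> carrier R" "L' \<subseteq> carrier R"
    and "P \<zero>"
    and "\<And>x y w. x \<in> L \<Longrightarrow> y \<in> L' \<Longrightarrow> w \<in> submod_prod R L L' \<Longrightarrow> P w \<Longrightarrow> P (x \<otimes> y \<oplus> w)"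
  shows "P z"
proof -
  from assms(1) obtain n :: nat and f g where fg: "\<forall>i<n. f i \<in> L \<and> g i \<in> L'"
    and w: "z = finsum R (\<lambda>i. f i \<otimes> g i) {..<n}"
    unfolding submod_prod_def by blast
  have "\<forall>i<n. f i \<in> L \<and> g i \<in> L' \<Longrightarrow> P (finsum R (\<lambda>i. f i \<otimes> g i) {..<n})
      \<and> finsum R (\<lambda>i. f i \<otimes> g i) {..<n} \<in> submod_prod R L L'"
  proof (induction n)
    case 0
    then show ?case using assms(4) SP_zero by simp
  next
    case (Suc n)
    have eq: "finsum R (\<lambda>i. f i \<otimes> g i) {..<Suc n} = f n \<otimes> g n \<oplus> finsum R (\<lambda>i. f i \<otimes> g i) {..<n}"
      unfolding lessThan_Suc
      apply (rule finsum_insert) using Suc.prems assms(2,3) by (auto intro!: m_closed)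
    have IH: "P (finsum R (\<lambda>i. f i \<otimes> g i) {..<n}) \<and> finsum R (\<lambda>i. f i \<otimes> g i) {..<n} \<in> submod_prod R L L'"
      using Suc by auto
    show ?case unfolding eq using assms(5)[OF _ _ IH[THEN conjunct2] IH[THEN conjunct1]]
      SP_cons[OF assms(2,3) _ _ IH[THEN conjunct2]] Suc.prems by auto
  qed
  then show ?thesis using fg w by auto
qed

lemma SP_mem: "L \<subseteq> carrier R \<Longrightarrow> L' \<subseteq> carrier R \<Longrightarrow> x \<in> L \<Longrightarrow> y \<in> L' \<Longrightarrow> x \<otimes> y \<in> submod_prod R L L'"
  using SP_cons[OF _ _ _ _ SP_zero, of L L' x y] by (auto dest!: subsetD)

lemma SP_least:
  assumes "L \<subseteq> carrier R" "L' \<subseteq> carrier R" "\<zero> \<in> M"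
    "\<And>a b. a \<in> M \<Longrightarrow> b \<in> M \<Longrightarrow> a \<oplus> b \<in> M"
    "\<And>x y. x \<in> L \<Longrightarrow> y \<in> L' \<Longrightarrow> x \<otimes> y \<in> M"
  shows "submod_prod R L L' \<subseteq> M"
proof
  fix z assume "z \<in> submod_prod R L L'"
  then show "z \<in> M" using assms(1,2)
    by (induction rule: SP_induct) (auto intro: assms)
qed

lemma SP_carrier: "L \<subseteq> carrier R \<Longrightarrow> L' \<subseteq> carrier R \<Longrightarrow> submod_prod R L L' \<subseteq> carrier R"
  by (rule SP_least) (auto dest!: subsetD)

lemma SP_add:
  assumes "L \<subseteq> carrier R" "L' \<subseteq> carrier R" "a \<in> submod_prod R L L'" "b \<in> submod_prod R L L'"
  shows "a \<oplus> b \<in> submod_prod R L L'"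
  using assms(3,1,2)
proof (induction rule: SP_induct)
  case zero
  then show ?case using assms(4) SP_carrier[OF assms(1,2)] by auto
next
  case (step x y w)
  have "b \<in> carrier R" using assms(4) SP_carrier[OF assms(1,2)] by auto
  then have "x \<otimes> y \<oplus> w \<oplus> b = x \<otimes> y \<oplus> (w \<oplus> b)"
    using step SP_carrier[OF assms(1,2)] assms by (auto intro!: a_assoc dest!: subsetD)
  then show ?case using SP_cons[OF assms(1,2) step(1,2) step(4)] by simp
qed

lemma SP_mono: "L1 \<subseteq> L2 \<Longrightarrow> L1' \<subseteq> L2' \<Longrightarrow> L2 \<subseteq> carrier R \<Longrightarrow> L2' \<subseteq> carrier R \<Longrightarrow>
   submod_prod R L1 L1' \<subseteq> submod_prod R L2 L2'"
  by (rule SP_least) (auto intro: SP_zero SP_add SP_mem)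

lemma SP_comm: "L \<subseteq> carrier R \<Longrightarrow> L' \<subseteq> carrier R \<Longrightarrow> submod_prod R L L' = submod_prod R L' L"
proof -
  assume a: "L \<subseteq> carrier R" "L' \<subseteq> carrier R"
  have c: "x \<otimes> y \<in> submod_prod R L2 L1" if "x \<in> L1" "y \<in> L2" "L1 \<subseteq> carrier R" "L2 \<subseteq> carrier R" for x y L1 L2
  proof -
    have "x \<otimes> y = y \<otimes> x" using that by (auto intro: m_comm)
    then show ?thesis using SP_mem[OF that(4,3) that(2,1)] by simp
  qed
  show ?thesis
    apply (rule equalityI)
    apply (rule SP_least) using a apply (auto intro: SP_zero SP_add c)[5]
    apply (rule SP_least) using a apply (auto intro: SP_zero SP_add c)[5]
    done
qed

lemma submod_carrier: "R_submod R K L \<Longrightarrow> L \<subseteq> carrier R"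
  unfolding R_submod_def by auto

lemma SP_smult:
  assumes "L \<subseteq> carrier R" "L' \<subseteq> carrier R" "\<And>r x. r \<in> K \<Longrightarrow> x \<in> L \<Longrightarrow> r \<otimes> x \<in> L"
    "K \<subseteq> carrier R" "r \<in> K" "z \<in> submod_prod R L L'"
  shows "r \<otimes> z \<in> submod_prod R L L'"
  using assms(6,1,2)
proof (induction rule: SP_induct)
  case zero
  then show ?case using assms(4,5) SP_zero by auto
next
  case (step x y w)
  have r: "r \<in> carrier R" using assms(4,5) by auto
  have w: "w \<in> carrier R" using step(3) SP_carrier[OF assms(1,2)] by auto
  have cc: "x \<in> carrier R" "y \<in> carrier R" using step(1,2) assms(1,2) by auto
  have "r \<otimes> (x \<otimes> y \<oplus> w) = (r \<otimes> x) \<otimes> y \<oplus> r \<otimes> w"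
    using r w cc by (simp add: r_distr m_assoc)
  then show ?case using SP_cons[OF assms(1,2) assms(3)[OF assms(5) step(1)] step(2) step(4)] by simp
qed

lemma SP_submod:
  assumes "R_submod R K L" "L' \<subseteq> carrier R" "K \<subseteq> carrier R"
  shows "R_submod R K (submod_prod R L L')"
proof -
  have L: "L \<subseteq> carrier R" by (rule submod_carrier[OF assms(1)])
  have sm: "\<And>r x. r \<in> K \<Longrightarrow> x \<in> L \<Longrightarrow> r \<otimes> x \<in> L" using assms(1) unfolding R_submod_def by blast
  show ?thesis unfolding R_submod_def
    using SP_carrier[OF L assms(2)] SP_zero[of L L'] SP_add[OF L assms(2)] SP_smult[OF L assms(2) sm assms(3)]
    by blast
qed

lemma SP_assoc:
  assumes "L1 \<subseteq> carrier R" "L2 \<subseteq> carrier R" "L3 \<subseteq> carrier R"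
  shows "submod_prod R (submod_prod R L1 L2) L3 = submod_prod R L1 (submod_prod R L2 L3)"
proof
  have c12: "submod_prod R L1 L2 \<subseteq> carrier R" and c23: "submod_prod R L2 L3 \<subseteq> carrier R"
    using SP_carrier assms by auto
  have *: "z \<otimes> w \<in> submod_prod R L1 (submod_prod R L2 L3)" if "z \<in> submod_prod R L1 L2" "w \<in> L3" for z w
    using that(1) assms(1,2)
  proof (induction rule: SP_induct)
    case zero
    then show ?case using that(2) assms(3) SP_zero by auto
  next
    case (step x y u)
    have cc: "x \<in> carrier R" "y \<in> carrier R" "u \<in> carrier R" "w \<in> carrier R"
      using step c12 assms that(2) by auto
    have "(x \<otimes> y \<oplus> u) \<otimes> w = x \<otimes> (y \<otimes> w) \<oplus> u \<otimes> w"
      using cc by (simp add: l_distr m_assoc)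
    then show ?case using step SP_add[OF assms(1) c23 SP_mem[OF assms(1) c23 step(1) SP_mem[OF assms(2,3) step(2) that(2)]]]
      by simp
  qed
  show "submod_prod R (submod_prod R L1 L2) L3 \<subseteq> submod_prod R L1 (submod_prod R L2 L3)"
    by (rule SP_least[OF c12 assms(3) SP_zero SP_add[OF assms(1) c23] *])
next
  have c12: "submod_prod R L1 L2 \<subseteq> carrier R" and c23: "submod_prod R L2 L3 \<subseteq> carrier R"
    using SP_carrier assms by auto
  have *: "x \<otimes> z \<in> submod_prod R (submod_prod R L1 L2) L3" if "z \<in> submod_prod R L2 L3" "x \<in> L1" for z x
    using that(1) assms(2,3)
  proof (induction rule: SP_induct)
    case zero
    then show ?case using that(2) assms(1) SP_zero by auto
  next
    case (step y w u)
    have cc: "x \<in> carrier R" "y \<in> carrier R" "u \<in> carrier R" "w \<in> carrier R"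
      using step c23 assms that(2) by auto
    have "x \<otimes> (y \<otimes> w \<oplus> u) = (x \<otimes> y) \<otimes> w \<oplus> x \<otimes> u"
      using cc by (simp add: r_distr m_assoc)
    then show ?case using step SP_add[OF c12 assms(3) SP_mem[OF c12 assms(3) SP_mem[OF assms(1,2) that(2) step(1)] step(2)]]
      by simp
  qed
  show "submod_prod R L1 (submod_prod R L2 L3) \<subseteq> submod_prod R (submod_prod R L1 L2) L3"
    by (rule SP_least[OF assms(1) c23 SP_zero SP_add[OF c12 assms(3)] *])
qed

lemma SP_one:
  assumes "subring K R" "R_submod R K L"
  shows "submod_prod R K L = L"
proof
  have K: "K \<subseteq> carrier R" "\<one> \<in> K" using subringE[OF assms(1)] by auto
  have L: "L \<subseteq> carrier R" by (rule submod_carrier[OF assms(2)])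
  show "submod_prod R K L \<subseteq> L" apply (rule SP_least[OF K(1) L]) using assms(2) unfolding R_submod_def by auto
  show "L \<subseteq> submod_prod R K L"
  proof
    fix x assume x: "x \<in> L"
    then have "x = \<one> \<otimes> x" using L by auto
    then show "x \<in> submod_prod R K L" using SP_mem[OF K(1) L K(2) x] by simp
  qed
qed

definition PI :: "'a set \<Rightarrow> 'a \<Rightarrow> 'a set" where
  "PI K x = {r \<otimes> x | r. r \<in> K}"

lemma PI_submod:
  assumes "subring K R" "x \<in> carrier R"
  shows "R_submod R K (PI K x)"
proof -
  have K: "K \<subseteq> carrier R" using subringE[OF assms(1)] by auto
  show ?thesis unfolding R_submod_def PI_def
  proof (intro conjI ballI)
    show "{r \<otimes> x |r. r \<in> K} \<subseteq> carrier R" using K assms(2) by auto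
    show "\<zero> \<in> {r \<otimes> x |r. r \<in> K}" using subringE(2)[OF assms(1)] assms(2) by (auto intro!: exI[of _ \<zero>])
    fix a b assume "a \<in> {r \<otimes> x |r. r \<in> K}" "b \<in> {r \<otimes> x |r. r \<in> K}"
    then obtain r s where "r \<in> K" "s \<in> K" "a = r \<otimes> x" "b = s \<otimes> x" by auto
    then show "a \<oplus> b \<in> {r \<otimes> x |r. r \<in> K}"
    proof -
      assume h: "r \<in> K" "s \<in> K" "a = r \<otimes> x" "b = s \<otimes> x"
      have "r \<in> carrier R" "s \<in> carrier R" using h K by auto
      then have "a \<oplus> b = (r \<oplus> s) \<otimes> x" using h assms by (simp add: l_distr)
      then show ?thesis using subringE(7)[OF assms(1) h(1,2)] by blast
    qed
  next
    fix a b assume "a \<in> K" "b \<in> {r \<otimes> x |r. r \<in> K}"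
    then obtain s where "a \<in> K" "s \<in> K" "b = s \<otimes> x" by auto
    then show "a \<otimes> b \<in> {r \<otimes> x |r. r \<in> K}"
    proof -
      assume h: "a \<in> K" "s \<in> K" "b = s \<otimes> x"
      have "a \<in> carrier R" "s \<in> carrier R" using h K by auto
      then have "a \<otimes> b = (a \<otimes> s) \<otimes> x" using h assms by (simp add: m_assoc)
      then show ?thesis using subringE(6)[OF assms(1) h(1,2)] by blast
    qed
  qed
qed

lemma PI_mult:
  assumes "subring K R" "x \<in> carrier R" "y \<in> carrier R"
  shows "submod_prod R (PI K x) (PI K y) = PI K (x \<otimes> y)"
proof
  have K: "K \<subseteq> carrier R" using subringE[OF assms(1)] by auto
  have cx: "PI K x \<subseteq> carrier R" "PI K y \<subseteq> carrier R" "PI K (x \<otimes> y) \<subseteq> carrier R"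
    using PI_submod[OF assms(1)] assms submod_carrier by auto
  have sm: "R_submod R K (PI K (x \<otimes> y))" using PI_submod[OF assms(1)] assms by auto
  show "submod_prod R (PI K x) (PI K y) \<subseteq> PI K (x \<otimes> y)"
  proof (rule SP_least[OF cx(1,2)])
    show "\<zero> \<in> PI K (x \<otimes> y)" using sm unfolding R_submod_def by auto
    show "a \<oplus> b \<in> PI K (x \<otimes> y)" if "a \<in> PI K (x \<otimes> y)" "b \<in> PI K (x \<otimes> y)" for a b
      using sm that unfolding R_submod_def by auto
    fix a b assume "a \<in> PI K x" "b \<in> PI K y"
    then obtain r s where rs: "r \<in> K" "s \<in> K" "a = r \<otimes> x" "b = s \<otimes> y" unfolding PI_def by auto
    have "r \<in> carrier R" "s \<in> carrier R" using rs K by auto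
    then have "a \<otimes> b = (r \<otimes> s) \<otimes> (x \<otimes> y)" using rs assms by (simp add: m_ac)
    then show "a \<otimes> b \<in> PI K (x \<otimes> y)" using rs subringE(6)[OF assms(1)] unfolding PI_def by auto
  qed
  show "PI K (x \<otimes> y) \<subseteq> submod_prod R (PI K x) (PI K y)"
  proof
    fix z assume "z \<in> PI K (x \<otimes> y)"
    then obtain r where r: "r \<in> K" "z = r \<otimes> (x \<otimes> y)" unfolding PI_def by auto
    have "r \<in> carrier R" using r K by auto
    then have "z = (r \<otimes> x) \<otimes> (\<one> \<otimes> y)" using r assms by (simp add: m_ac)
    moreover have "r \<otimes> x \<in> PI K x" "\<one> \<otimes> y \<in> PI K y" using r subringE(3)[OF assms(1)] unfolding PI_def by auto
    ultimately show "z \<in> submod_prod R (PI K x) (PI K y)" using SP_mem[OF cx(1,2)] by simp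
  qed
qed

lemma PI_one: assumes "subring K R" shows "PI K \<one> = K"
proof -
  have "r \<otimes> \<one> = r" if "r \<in> K" for r using that subringE(1)[OF assms] by auto
  then show ?thesis unfolding PI_def by force
qed

lemma K_submod: assumes "subring K R" shows "R_submod R K K"
  unfolding R_submod_def using subringE(1,2,6,7)[OF assms] by simp

lemma inv_ideal_carrier: "invertible_ideal R K L \<Longrightarrow> L \<subseteq> carrier R"
  unfolding invertible_ideal_def R_submod_def by simp

lemma Inv_group_comm:
  assumes K: "subring K R"
  shows "comm_group (Inv_group R K)"
proof (rule comm_groupI)
  have Kc: "K \<subseteq> carrier R" using subringE(1)[OF K] .
  note cI = inv_ideal_carrier
  fix x y z
  assume x: "x \<in> carrier (Inv_group R K)" and y: "y \<in> carrier (Inv_group R K)"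
  then obtain x' y' where x': "R_submod R K x'" "submod_prod R x x' = K" and
    y': "R_submod R K y'" "submod_prod R y y' = K"
    and xs: "R_submod R K x" and ys: "R_submod R K y"
    unfolding Inv_group_def invertible_ideal_def by auto
  have xc: "x \<subseteq> carrier R" "y \<subseteq> carrier R" "x' \<subseteq> carrier R" "y' \<subseteq> carrier R"
    using xs ys x' y' submod_carrier by auto
  have "submod_prod R (submod_prod R x y) (submod_prod R x' y') = K"
  proof -
    have "submod_prod R (submod_prod R x y) (submod_prod R x' y')
      = submod_prod R x (submod_prod R y (submod_prod R x' y'))"
      by (rule SP_assoc[OF xc(1,2) SP_carrier[OF xc(3,4)]])
    also have "submod_prod R y (submod_prod R x' y') = submod_prod R (submod_prod R y x') y'"
      by (rule SP_assoc[OF xc(2,3,4), symmetric])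
    also have "submod_prod R y x' = submod_prod R x' y" by (rule SP_comm[OF xc(2,3)])
    also have "submod_prod R (submod_prod R x' y) y' = submod_prod R x' (submod_prod R y y')"
      by (rule SP_assoc[OF xc(3,2,4)])
    also have "\<dots> = x'" using y'(2) SP_comm[of x' K] Kc xc SP_one[OF K x'(1)] by simp
    finally show ?thesis using x'(2) by simp
  qed
  then show "x \<otimes>\<^bsub>Inv_group R K\<^esub> y \<in> carrier (Inv_group R K)"
    unfolding Inv_group_def invertible_ideal_def
    using SP_submod[OF xs xc(2) Kc] SP_submod[OF x'(1) xc(4) Kc] by auto
  show "x \<otimes>\<^bsub>Inv_group R K\<^esub> y = y \<otimes>\<^bsub>Inv_group R K\<^esub> x"
    unfolding Inv_group_def using SP_comm[OF xc(1,2)] by simp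
  show "\<one>\<^bsub>Inv_group R K\<^esub> \<otimes>\<^bsub>Inv_group R K\<^esub> x = x"
    unfolding Inv_group_def using SP_one[OF K xs] by simp
  show "\<exists>y\<in>carrier (Inv_group R K). y \<otimes>\<^bsub>Inv_group R K\<^esub> x = \<one>\<^bsub>Inv_group R K\<^esub>"
    apply (rule bexI[of _ x'])
    unfolding Inv_group_def invertible_ideal_def using x' xs SP_comm[OF xc(3,1)] by auto
  assume z: "z \<in> carrier (Inv_group R K)"
  then show "x \<otimes>\<^bsub>Inv_group R K\<^esub> y \<otimes>\<^bsub>Inv_group R K\<^esub> z =
       x \<otimes>\<^bsub>Inv_group R K\<^esub> (y \<otimes>\<^bsub>Inv_group R K\<^esub> z)"
    unfolding Inv_group_def using SP_assoc[OF xc(1,2) cI] by (auto simp: Inv_group_def)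
next
  show "\<one>\<^bsub>Inv_group R K\<^esub> \<in> carrier (Inv_group R K)"
    unfolding Inv_group_def invertible_ideal_def
    using K_submod[OF K] SP_one[OF K K_submod[OF K]] by auto
qed

lemma principal_PI: "principal_ideals R K = PI K ` Units R"
  unfolding principal_ideals_def PI_def by auto

lemma PI_in_Inv:
  assumes K: "subring K R" and x: "x \<in> Units R"
  shows "PI K x \<in> carrier (Inv_group R K)"
proof -
  have c: "inv x \<in> carrier R" "x \<in> carrier R" using x by auto
  then have "submod_prod R (PI K x) (PI K (inv x)) = K"
    using PI_mult[OF K, of x "inv x"] x PI_one[OF K] by auto
  then show ?thesis unfolding Inv_group_def invertible_ideal_def
    using PI_submod[OF K c(1)] PI_submod[OF K c(2)] by auto
qed

lemma principal_subgroup: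
  assumes K: "subring K R"
  shows "subgroup (principal_ideals R K) (Inv_group R K)"
proof -
  interpret G: comm_group "Inv_group R K" by (rule Inv_group_comm[OF K])
  show ?thesis unfolding principal_PI
  proof (rule G.subgroupI)
    show "PI K ` Units R \<subseteq> carrier (Inv_group R K)" using PI_in_Inv[OF K] by auto
    show "PI K ` Units R \<noteq> {}" by auto
  next
    fix a assume "a \<in> PI K ` Units R"
    then obtain x where x: "x \<in> Units R" "a = PI K x" by auto
    have "inv\<^bsub>Inv_group R K\<^esub> (PI K x) = PI K (inv x)"
      apply (rule G.inv_equality)
      using PI_mult[OF K, of "inv x" x] x PI_one[OF K] PI_in_Inv[OF K] by (auto simp: Inv_group_def)
    then show "inv\<^bsub>Inv_group R K\<^esub> a \<in> PI K ` Units R" using x by auto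
  next
    fix a b assume "a \<in> PI K ` Units R" "b \<in> PI K ` Units R"
    then obtain x y where "x \<in> Units R" "a = PI K x" "y \<in> Units R" "b = PI K y" by auto
    then show "a \<otimes>\<^bsub>Inv_group R K\<^esub> b \<in> PI K ` Units R"
      using PI_mult[OF K, of x y] by (auto simp: Inv_group_def)
  qed
qed

lemma Cart_group_comm:
  assumes K: "subring K R"
  shows "comm_group (Cart_group R K)"
  unfolding Cart_group_def
  by (rule comm_group.abelian_FactGroup[OF Inv_group_comm[OF K] principal_subgroup[OF K]])

end

context cring
begin

lemma nzd_one: "nzd R \<one>"
  unfolding nzd_def by simp

lemma nzd_carrier: "nzd R s \<Longrightarrow> s \<in> carrier R"
  unfolding nzd_def by simp

lemma nzd_mult: assumes "nzd R s" "nzd R t" shows "nzd R (s \<otimes> t)"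
  unfolding nzd_def
proof (intro conjI ballI impI)
  have s: "s \<in> carrier R" and t: "t \<in> carrier R" using assms nzd_carrier by auto
  then show "s \<otimes> t \<in> carrier R" by simp
  fix x assume x: "x \<in> carrier R" and "s \<otimes> t \<otimes> x = \<zero>"
  then have "s \<otimes> (t \<otimes> x) = \<zero>" using s t by (simp add: m_assoc)
  then have "t \<otimes> x = \<zero>" using assms(1) x t unfolding nzd_def by simp
  then show "x = \<zero>" using assms(2) x unfolding nzd_def by simp
qed

lemma nzd_cancel:
  assumes "nzd R s" "a \<in> carrier R" "b \<in> carrier R" "s \<otimes> a = s \<otimes> b"
  shows "a = b"
proof -
  have s: "s \<in> carrier R" using assms nzd_carrier by auto
  have "s \<otimes> (a \<ominus> b) = s \<otimes> a \<ominus> s \<otimes> b" using assms s by algebra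
  also have "\<dots> = \<zero>" using assms s by (simp add: r_neg)
  finally have "a \<ominus> b = \<zero>" using assms(1,2,3) unfolding nzd_def by simp
  then show ?thesis using assms(2,3) by simp
qed

lemma frac_set:
  "frac R a s = {(b,t). a \<in> carrier R \<and> b \<in> carrier R \<and> nzd R s \<and> nzd R t \<and> a \<otimes> t = b \<otimes> s}"
  unfolding frac_def frac_rel_def by auto

lemma frac_self: "a \<in> carrier R \<Longrightarrow> nzd R s \<Longrightarrow> (a, s) \<in> frac R a s"
  unfolding frac_set using nzd_carrier by (auto simp: m_comm)

lemma frac_eq:
  assumes "a \<in> carrier R" "nzd R s" "b \<in> carrier R" "nzd R t"
  shows "frac R a s = frac R b t \<longleftrightarrow> a \<otimes> t = b \<otimes> s"
proof
  assume "frac R a s = frac R b t"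
  then have "(b, t) \<in> frac R a s" using frac_self assms by auto
  then show "a \<otimes> t = b \<otimes> s" unfolding frac_set by auto
next
  assume e: "a \<otimes> t = b \<otimes> s"
  have s: "s \<in> carrier R" and t: "t \<in> carrier R" using assms nzd_carrier by auto
  have "a \<otimes> u = c \<otimes> s \<longleftrightarrow> b \<otimes> u = c \<otimes> t" if "c \<in> carrier R" "nzd R u" for c u
  proof -
    have u: "u \<in> carrier R" using that nzd_carrier by auto
    have "a \<otimes> u = c \<otimes> s \<longleftrightarrow> t \<otimes> (a \<otimes> u) = t \<otimes> (c \<otimes> s)"
      using nzd_cancel[OF assms(4)] assms u that s t by auto
    also have "t \<otimes> (a \<otimes> u) = s \<otimes> (b \<otimes> u)" using e assms s t u
      by (metis m_assoc m_comm)
    also have "t \<otimes> (c \<otimes> s) = s \<otimes> (c \<otimes> t)" using that s t u by (metis m_assoc m_comm)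
    also have "s \<otimes> (b \<otimes> u) = s \<otimes> (c \<otimes> t) \<longleftrightarrow> b \<otimes> u = c \<otimes> t"
      using nzd_cancel[OF assms(2)] assms u that s t by auto
    finally show ?thesis .
  qed
  then show "frac R a s = frac R b t" unfolding frac_set using assms by auto
qed

lemma Tot_carrier: "carrier (Tot R) = {frac R a s | a s. a \<in> carrier R \<and> nzd R s}"
  unfolding Tot_def by simp

lemma Tot_one: "\<one>\<^bsub>Tot R\<^esub> = frac R \<one> \<one>"
  unfolding Tot_def by simp

lemma Tot_zero: "\<zero>\<^bsub>Tot R\<^esub> = frac R \<zero> \<one>"
  unfolding Tot_def by simp

lemma frac_in_Tot: "a \<in> carrier R \<Longrightarrow> nzd R s \<Longrightarrow> frac R a s \<in> carrier (Tot R)"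
  unfolding Tot_carrier by auto

lemma Tot_mult:
  assumes "a \<in> carrier R" "nzd R s" "b \<in> carrier R" "nzd R t"
  shows "frac R a s \<otimes>\<^bsub>Tot R\<^esub> frac R b t = frac R (a \<otimes> b) (s \<otimes> t)"
proof -
  have s: "s \<in> carrier R" and t: "t \<in> carrier R" using assms nzd_carrier by auto
  have "frac R (a' \<otimes> b') (s' \<otimes> t') = frac R (a \<otimes> b) (s \<otimes> t)"
    if "(a', s') \<in> frac R a s" "(b', t') \<in> frac R b t" for a' s' b' t'
  proof -
    from that have h: "a' \<in> carrier R" "nzd R s'" "b' \<in> carrier R" "nzd R t'"
      "a \<otimes> s' = a' \<otimes> s" "b \<otimes> t' = b' \<otimes> t" unfolding frac_set by auto
    have s': "s' \<in> carrier R" and t': "t' \<in> carrier R" using h nzd_carrier by auto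
    have "a' \<otimes> b' \<otimes> (s \<otimes> t) = (a' \<otimes> s) \<otimes> (b' \<otimes> t)" using h s t by algebra
    also have "\<dots> = (a \<otimes> s') \<otimes> (b \<otimes> t')" using h by simp
    also have "(a \<otimes> s') \<otimes> (b \<otimes> t') = a \<otimes> b \<otimes> (s' \<otimes> t')" using s' t' assms s t by algebra
    finally show ?thesis using frac_eq h assms nzd_mult by auto
  qed
  note X = this
  have "{frac R (a' \<otimes> b') (s' \<otimes> t') | a' s' b' t'. (a', s') \<in> frac R a s \<and> (b', t') \<in> frac R b t} = {frac R (a \<otimes> b) (s \<otimes> t)}"
  proof (rule equalityI)
    show "{frac R (a' \<otimes> b') (s' \<otimes> t') | a' s' b' t'. (a', s') \<in> frac R a s \<and> (b', t') \<in> frac R b t} \<subseteq> {frac R (a \<otimes> b) (s \<otimes> t)}"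
      using X by auto
    have "frac R (a \<otimes> b) (s \<otimes> t) \<in> {frac R (a' \<otimes> b') (s' \<otimes> t') | a' s' b' t'. (a', s') \<in> frac R a s \<and> (b', t') \<in> frac R b t}"
      using frac_self[OF assms(1,2)] frac_self[OF assms(3,4)] by blast
    then show "{frac R (a \<otimes> b) (s \<otimes> t)} \<subseteq> {frac R (a' \<otimes> b') (s' \<otimes> t') | a' s' b' t'. (a', s') \<in> frac R a s \<and> (b', t') \<in> frac R b t}"
      using X[OF frac_self[OF assms(1,2)] frac_self[OF assms(3,4)]] by simp
  qed
  then show ?thesis unfolding Tot_def by simp
qed

lemma Tot_add:
  assumes "a \<in> carrier R" "nzd R s" "b \<in> carrier R" "nzd R t"
  shows "frac R a s \<oplus>\<^bsub>Tot R\<^esub> frac R b t = frac R (a \<otimes> t \<oplus> b \<otimes> s) (s \<otimes> t)"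
proof -
  have s: "s \<in> carrier R" and t: "t \<in> carrier R" using assms nzd_carrier by auto
  have "frac R (a' \<otimes> t' \<oplus> b' \<otimes> s') (s' \<otimes> t') = frac R (a \<otimes> t \<oplus> b \<otimes> s) (s \<otimes> t)"
    if "(a', s') \<in> frac R a s" "(b', t') \<in> frac R b t" for a' s' b' t'
  proof -
    from that have h: "a' \<in> carrier R" "nzd R s'" "b' \<in> carrier R" "nzd R t'"
      "a \<otimes> s' = a' \<otimes> s" "b \<otimes> t' = b' \<otimes> t" unfolding frac_set by auto
    have s': "s' \<in> carrier R" and t': "t' \<in> carrier R" using h nzd_carrier by auto
    have "(a' \<otimes> t' \<oplus> b' \<otimes> s') \<otimes> (s \<otimes> t) = (a' \<otimes> s) \<otimes> (t \<otimes> t') \<oplus> (b' \<otimes> t) \<otimes> (s \<otimes> s')"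
      using h s t s' t' by algebra
    also have "\<dots> = (a \<otimes> s') \<otimes> (t \<otimes> t') \<oplus> (b \<otimes> t') \<otimes> (s \<otimes> s')" using h by simp
    also have "(a \<otimes> s') \<otimes> (t \<otimes> t') \<oplus> (b \<otimes> t') \<otimes> (s \<otimes> s') = (a \<otimes> t \<oplus> b \<otimes> s) \<otimes> (s' \<otimes> t')" using s' t' s t assms by algebra
    finally show ?thesis using frac_eq h assms nzd_mult s t s' t' by auto
  qed
  note X = this
  have "{frac R (a' \<otimes> t' \<oplus> b' \<otimes> s') (s' \<otimes> t') | a' s' b' t'. (a', s') \<in> frac R a s \<and> (b', t') \<in> frac R b t} = {frac R (a \<otimes> t \<oplus> b \<otimes> s) (s \<otimes> t)}"
  proof (rule equalityI)
    show "{frac R (a' \<otimes> t' \<oplus> b' \<otimes> s') (s' \<otimes> t') | a' s' b' t'. (a', s') \<in> frac R a s \<and> (b', t') \<in> frac R b t} \<subseteq> {frac R (a \<otimes> t \<oplus> b \<otimes> s) (s \<otimes> t)}"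
      using X by auto
    have "frac R (a \<otimes> t \<oplus> b \<otimes> s) (s \<otimes> t) \<in> {frac R (a' \<otimes> t' \<oplus> b' \<otimes> s') (s' \<otimes> t') | a' s' b' t'. (a', s') \<in> frac R a s \<and> (b', t') \<in> frac R b t}"
      using frac_self[OF assms(1,2)] frac_self[OF assms(3,4)] by blast
    then show "{frac R (a \<otimes> t \<oplus> b \<otimes> s) (s \<otimes> t)} \<subseteq> {frac R (a' \<otimes> t' \<oplus> b' \<otimes> s') (s' \<otimes> t') | a' s' b' t'. (a', s') \<in> frac R a s \<and> (b', t') \<in> frac R b t}"
      using X[OF frac_self[OF assms(1,2)] frac_self[OF assms(3,4)]] by simp
  qed
  then show ?thesis unfolding Tot_def by simp
qed

lemma Tot_cases:
  assumes "x \<in> carrier (Tot R)"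
  obtains a s where "a \<in> carrier R" "nzd R s" "x = frac R a s"
  using assms unfolding Tot_carrier by auto

lemma Tot_cring: "cring (Tot R)"
proof (rule cringI)
  show "abelian_group (Tot R)"
  proof (rule abelian_groupI)
    fix x y z
    assume x: "x \<in> carrier (Tot R)" and y: "y \<in> carrier (Tot R)"
    obtain a s where a: "a \<in> carrier R" "nzd R s" "x = frac R a s" using x by (rule Tot_cases)
    obtain b t where b: "b \<in> carrier R" "nzd R t" "y = frac R b t" using y by (rule Tot_cases)
    have s: "s \<in> carrier R" and t: "t \<in> carrier R" using a b nzd_carrier by auto
    show "x \<oplus>\<^bsub>Tot R\<^esub> y \<in> carrier (Tot R)"
      using a b s t by (simp add: Tot_add frac_in_Tot nzd_mult)
    show "x \<oplus>\<^bsub>Tot R\<^esub> y = y \<oplus>\<^bsub>Tot R\<^esub> x"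
      using a b s t by (simp add: Tot_add frac_eq nzd_mult) algebra
    assume z: "z \<in> carrier (Tot R)"
    obtain c u where c: "c \<in> carrier R" "nzd R u" "z = frac R c u" using z by (rule Tot_cases)
    have u: "u \<in> carrier R" using c nzd_carrier by auto
    show "x \<oplus>\<^bsub>Tot R\<^esub> y \<oplus>\<^bsub>Tot R\<^esub> z = x \<oplus>\<^bsub>Tot R\<^esub> (y \<oplus>\<^bsub>Tot R\<^esub> z)"
      using a b c s t u by (simp add: Tot_add frac_eq nzd_mult) algebra
  next
    show "\<zero>\<^bsub>Tot R\<^esub> \<in> carrier (Tot R)" unfolding Tot_zero by (simp add: frac_in_Tot nzd_one)
  next
    fix x assume x: "x \<in> carrier (Tot R)"
    obtain a s where a: "a \<in> carrier R" "nzd R s" "x = frac R a s" using x by (rule Tot_cases)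
    have s: "s \<in> carrier R" using a nzd_carrier by auto
    show "\<zero>\<^bsub>Tot R\<^esub> \<oplus>\<^bsub>Tot R\<^esub> x = x"
      using a s unfolding Tot_zero by (simp add: Tot_add frac_eq nzd_mult nzd_one) algebra
    have "frac R (\<ominus> a) s \<oplus>\<^bsub>Tot R\<^esub> x = \<zero>\<^bsub>Tot R\<^esub>"
      using a s unfolding Tot_zero by (simp add: Tot_add frac_eq nzd_mult nzd_one) algebra
    then show "\<exists>y\<in>carrier (Tot R). y \<oplus>\<^bsub>Tot R\<^esub> x = \<zero>\<^bsub>Tot R\<^esub>"
      using a by (intro bexI[of _ "frac R (\<ominus> a) s"]) (auto intro: frac_in_Tot)
  qed
next
  show "comm_monoid (Tot R)"
  proof (rule comm_monoidI)
    fix x y z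
    assume x: "x \<in> carrier (Tot R)" and y: "y \<in> carrier (Tot R)"
    obtain a s where a: "a \<in> carrier R" "nzd R s" "x = frac R a s" using x by (rule Tot_cases)
    obtain b t where b: "b \<in> carrier R" "nzd R t" "y = frac R b t" using y by (rule Tot_cases)
    have s: "s \<in> carrier R" and t: "t \<in> carrier R" using a b nzd_carrier by auto
    show "x \<otimes>\<^bsub>Tot R\<^esub> y \<in> carrier (Tot R)"
      using a b s t by (simp add: Tot_mult frac_in_Tot nzd_mult)
    show "x \<otimes>\<^bsub>Tot R\<^esub> y = y \<otimes>\<^bsub>Tot R\<^esub> x"
      using a b s t by (simp add: Tot_mult frac_eq nzd_mult) algebra
    assume z: "z \<in> carrier (Tot R)"
    obtain c u where c: "c \<in> carrier R" "nzd R u" "z = frac R c u" using z by (rule Tot_cases)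
    have u: "u \<in> carrier R" using c nzd_carrier by auto
    show "x \<otimes>\<^bsub>Tot R\<^esub> y \<otimes>\<^bsub>Tot R\<^esub> z = x \<otimes>\<^bsub>Tot R\<^esub> (y \<otimes>\<^bsub>Tot R\<^esub> z)"
      using a b c s t u by (simp add: Tot_mult frac_eq nzd_mult) algebra
  next
    show "\<one>\<^bsub>Tot R\<^esub> \<in> carrier (Tot R)" unfolding Tot_one by (simp add: frac_in_Tot nzd_one)
  next
    fix x assume x: "x \<in> carrier (Tot R)"
    obtain a s where a: "a \<in> carrier R" "nzd R s" "x = frac R a s" using x by (rule Tot_cases)
    have s: "s \<in> carrier R" using a nzd_carrier by auto
    show "\<one>\<^bsub>Tot R\<^esub> \<otimes>\<^bsub>Tot R\<^esub> x = x"
      using a s unfolding Tot_one by (simp add: Tot_mult frac_eq nzd_mult nzd_one)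
  qed
next
  fix x y z
  assume x: "x \<in> carrier (Tot R)" and y: "y \<in> carrier (Tot R)" and z: "z \<in> carrier (Tot R)"
  obtain a s where a: "a \<in> carrier R" "nzd R s" "x = frac R a s" using x by (rule Tot_cases)
  obtain b t where b: "b \<in> carrier R" "nzd R t" "y = frac R b t" using y by (rule Tot_cases)
  obtain c u where c: "c \<in> carrier R" "nzd R u" "z = frac R c u" using z by (rule Tot_cases)
  have s: "s \<in> carrier R" and t: "t \<in> carrier R" and u: "u \<in> carrier R" using a b c nzd_carrier by auto
  show "(x \<oplus>\<^bsub>Tot R\<^esub> y) \<otimes>\<^bsub>Tot R\<^esub> z = x \<otimes>\<^bsub>Tot R\<^esub> z \<oplus>\<^bsub>Tot R\<^esub> y \<otimes>\<^bsub>Tot R\<^esub> z"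
    using a b c s t u by (simp add: Tot_mult Tot_add frac_eq nzd_mult) algebra
qed

lemma emb_hom: "(\<lambda>a. frac R a \<one>) \<in> ring_hom R (Tot R)"
proof (rule ring_hom_memI)
  show "frac R x \<one> \<in> carrier (Tot R)" if "x \<in> carrier R" for x
    using that by (simp add: frac_in_Tot nzd_one)
  show "frac R (x \<otimes> y) \<one> = frac R x \<one> \<otimes>\<^bsub>Tot R\<^esub> frac R y \<one>"
    if "x \<in> carrier R" "y \<in> carrier R" for x y using that by (simp add: Tot_mult nzd_one)
  show "frac R (x \<oplus> y) \<one> = frac R x \<one> \<oplus>\<^bsub>Tot R\<^esub> frac R y \<one>"
    if "x \<in> carrier R" "y \<in> carrier R" for x y using that by (simp add: Tot_add nzd_one)
  show "frac R \<one> \<one> = \<one>\<^bsub>Tot R\<^esub>" by (simp add: Tot_one)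
qed

lemma emb_inj: "a \<in> carrier R \<Longrightarrow> b \<in> carrier R \<Longrightarrow> frac R a \<one> = frac R b \<one> \<longleftrightarrow> a = b"
  by (simp add: frac_eq nzd_one)

lemma canon_img: "canon R = (\<lambda>a. frac R a \<one>) ` carrier R"
  unfolding canon_def by auto

lemma canon_subring: "subring (canon R) (Tot R)"
proof -
  interpret T: cring "Tot R" by (rule Tot_cring)
  interpret h: ring_hom_ring R "Tot R" "\<lambda>a. frac R a \<one>"
    by (intro ring_hom_ringI2 ring_axioms T.ring_axioms emb_hom)
  show ?thesis unfolding canon_img using h.img_is_subring[OF carrier_is_subring] .
qed

lemma frac_unit:
  assumes "a \<in> carrier R" "nzd R a"
  shows "frac R a \<one> \<in> Units (Tot R)" "inv\<^bsub>Tot R\<^esub> (frac R a \<one>) = frac R \<one> a"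
proof -
  interpret T: cring "Tot R" by (rule Tot_cring)
  have c: "frac R a \<one> \<in> carrier (Tot R)" "frac R \<one> a \<in> carrier (Tot R)"
    using assms by (auto intro: frac_in_Tot nzd_one)
  have e: "frac R \<one> a \<otimes>\<^bsub>Tot R\<^esub> frac R a \<one> = \<one>\<^bsub>Tot R\<^esub>"
    using assms by (simp add: Tot_mult Tot_one nzd_one frac_eq nzd_mult nzd_carrier)
  have e2: "frac R a \<one> \<otimes>\<^bsub>Tot R\<^esub> frac R \<one> a = \<one>\<^bsub>Tot R\<^esub>"
    using e c T.m_comm by metis
  show "frac R a \<one> \<in> Units (Tot R)" unfolding Units_def using e e2 c by blast
  show "inv\<^bsub>Tot R\<^esub> (frac R a \<one>) = frac R \<one> a"
    using T.comm_inv_char[OF c e2] .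
qed

lemma frac_split:
  assumes "a \<in> carrier R" "nzd R s"
  shows "frac R a s = frac R a \<one> \<otimes>\<^bsub>Tot R\<^esub> frac R \<one> s"
  using assms by (simp add: Tot_mult nzd_one nzd_carrier)

end

definition scl :: "('a,'b) ring_scheme \<Rightarrow> 'a \<Rightarrow> 'a set \<Rightarrow> 'a set" where
  "scl S u Z1 = (\<lambda>x. u \<otimes>\<^bsub>S\<^esub> x) ` Z1"

context cring
begin

lemma sc_carrier: "u \<in> carrier R \<Longrightarrow> Z1 \<subseteq> carrier R \<Longrightarrow> scl R u Z1 \<subseteq> carrier R"
  unfolding scl_def by auto

lemma sc_mem: "x \<in> Z1 \<Longrightarrow> u \<otimes> x \<in> scl R u Z1"
  unfolding scl_def by auto

lemma sc_sc: assumes "u \<in> carrier R" "v \<in> carrier R" "Z1 \<subseteq> carrier R"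
  shows "scl R u (scl R v Z1) = scl R (u \<otimes> v) Z1"
proof -
  have "u \<otimes> (v \<otimes> x) = (u \<otimes> v) \<otimes> x" if "x \<in> Z1" for x
    using that assms by (auto simp: m_assoc)
  then show ?thesis unfolding scl_def image_image by (auto intro!: image_cong)
qed

lemma sc_one: assumes "Z1 \<subseteq> carrier R" shows "scl R \<one> Z1 = Z1"
proof -
  have "(\<lambda>x. \<one> \<otimes> x) ` Z1 = (\<lambda>x. x) ` Z1" using assms by (intro image_cong) auto
  then show ?thesis unfolding scl_def by simp
qed

lemma sc_inv: assumes "u \<in> Units R" "Z1 \<subseteq> carrier R"
  shows "scl R (inv u) (scl R u Z1) = Z1"
  using sc_sc[of "inv u" u Z1] assms sc_one by auto

lemma sc_inv2: assumes "u \<in> Units R" "Z1 \<subseteq> carrier R"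
  shows "scl R u (scl R (inv u) Z1) = Z1"
  using sc_sc[of u "inv u" Z1] assms sc_one by auto

lemma sc_SP:
  assumes u: "u \<in> carrier R" and Z1: "Z1 \<subseteq> carrier R" and Z2: "Z2 \<subseteq> carrier R"
  shows "submod_prod R (scl R u Z1) Z2 = scl R u (submod_prod R Z1 Z2)"
proof
  have cX: "scl R u Z1 \<subseteq> carrier R" using sc_carrier u Z1 by auto
  show "submod_prod R (scl R u Z1) Z2 \<subseteq> scl R u (submod_prod R Z1 Z2)"
  proof (rule SP_least[OF cX Z2])
    show "\<zero> \<in> scl R u (submod_prod R Z1 Z2)" using sc_mem[OF SP_zero, of u Z1 Z2] u by simp
    fix a b assume "a \<in> scl R u (submod_prod R Z1 Z2)" "b \<in> scl R u (submod_prod R Z1 Z2)"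
    then obtain a' b' where ab: "a' \<in> submod_prod R Z1 Z2" "b' \<in> submod_prod R Z1 Z2" "a = u \<otimes> a'" "b = u \<otimes> b'"
      unfolding scl_def by auto
    have "a' \<in> carrier R" "b' \<in> carrier R" using ab SP_carrier[OF Z1 Z2] by auto
    then have "a \<oplus> b = u \<otimes> (a' \<oplus> b')" using ab u by (simp add: r_distr)
    then show "a \<oplus> b \<in> scl R u (submod_prod R Z1 Z2)" using sc_mem[OF SP_add[OF Z1 Z2 ab(1,2)]] by simp
  next
    fix x y assume "x \<in> scl R u Z1" "y \<in> Z2"
    then obtain x' where x': "x' \<in> Z1" "x = u \<otimes> x'" "y \<in> Z2" unfolding scl_def by auto
    have "x' \<in> carrier R" "y \<in> carrier R" using x' Z1 Z2 by auto
    then have "x \<otimes> y = u \<otimes> (x' \<otimes> y)" using x' u by (simp add: m_assoc)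
    then show "x \<otimes> y \<in> scl R u (submod_prod R Z1 Z2)" using sc_mem[OF SP_mem[OF Z1 Z2 x'(1,3)]] by simp
  qed
  show "scl R u (submod_prod R Z1 Z2) \<subseteq> submod_prod R (scl R u Z1) Z2"
  proof
    fix z assume "z \<in> scl R u (submod_prod R Z1 Z2)"
    then obtain w where w: "w \<in> submod_prod R Z1 Z2" "z = u \<otimes> w" unfolding scl_def by auto
    have "u \<otimes> w \<in> submod_prod R (scl R u Z1) Z2" using w(1) Z1 Z2
    proof (induction rule: SP_induct)
      case zero
      then show ?case using SP_zero u by simp
    next
      case (step x y w')
      have c: "x \<in> carrier R" "y \<in> carrier R" "w' \<in> carrier R" using step Z1 Z2 SP_carrier[OF Z1 Z2] by auto
      have "u \<otimes> (x \<otimes> y \<oplus> w') = (u \<otimes> x) \<otimes> y \<oplus> u \<otimes> w'" using c u by algebra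
      then show ?case using SP_cons[OF cX Z2 sc_mem[OF step(1)] step(2) step(4)] by simp
    qed
    then show "z \<in> submod_prod R (scl R u Z1) Z2" using w by simp
  qed
qed

lemma sc_submod:
  assumes "R_submod R K Z1" "u \<in> carrier R" "K \<subseteq> carrier R"
  shows "R_submod R K (scl R u Z1)"
proof -
  have Z1: "Z1 \<subseteq> carrier R" using assms(1) submod_carrier by auto
  show ?thesis unfolding R_submod_def
  proof (intro conjI ballI)
    show "scl R u Z1 \<subseteq> carrier R" using sc_carrier assms(2) Z1 by auto
    show "\<zero> \<in> scl R u Z1" using sc_mem[of \<zero> Z1 u] assms unfolding R_submod_def by simp
    fix a b assume "a \<in> scl R u Z1" "b \<in> scl R u Z1"
    then obtain a' b' where ab: "a' \<in> Z1" "b' \<in> Z1" "a = u \<otimes> a'" "b = u \<otimes> b'" unfolding scl_def by auto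
    have "a' \<in> carrier R" "b' \<in> carrier R" using ab Z1 by auto
    then have "a \<oplus> b = u \<otimes> (a' \<oplus> b')" using ab assms(2) by (simp add: r_distr)
    moreover have "a' \<oplus> b' \<in> Z1" using ab assms(1) unfolding R_submod_def by auto
    ultimately show "a \<oplus> b \<in> scl R u Z1" using sc_mem by simp
  next
    fix r b assume "r \<in> K" "b \<in> scl R u Z1"
    then obtain b' where ab: "r \<in> K" "b' \<in> Z1" "b = u \<otimes> b'" unfolding scl_def by auto
    have "r \<in> carrier R" "b' \<in> carrier R" using ab Z1 assms(3) by auto
    then have "r \<otimes> b = u \<otimes> (r \<otimes> b')" using ab assms(2) by (simp add: m_lcomm)
    moreover have "r \<otimes> b' \<in> Z1" using ab assms(1) unfolding R_submod_def by auto
    ultimately show "r \<otimes> b \<in> scl R u Z1" using sc_mem by simp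
  qed
qed

lemma PI_sc: assumes "K \<subseteq> carrier R" "u \<in> carrier R" shows "PI K u = scl R u K"
proof -
  have "{r \<otimes> u | r. r \<in> K} = (\<lambda>r. r \<otimes> u) ` K" by auto
  also have "\<dots> = (\<lambda>r. u \<otimes> r) ` K"
    by (rule image_cong) (use assms in \<open>auto intro: m_comm\<close>)
  finally show ?thesis unfolding PI_def scl_def .
qed

lemma SP_sub_subring:
  assumes "subring K R" "subring K' R" "K' \<subseteq> K"
  shows "submod_prod R K K' = K"
proof
  have K: "K \<subseteq> carrier R" "K' \<subseteq> carrier R" using assms subringE(1) by auto
  show "submod_prod R K K' \<subseteq> K"
    by (rule SP_least[OF K]) (use assms(3) subringE(2,6,7)[OF assms(1)] in auto)
  show "K \<subseteq> submod_prod R K K'"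
  proof
    fix k assume k: "k \<in> K"
    then have "k = k \<otimes> \<one>" using K by auto
    then show "k \<in> submod_prod R K K'" using SP_mem[OF K k subringE(3)[OF assms(2)]] by simp
  qed
qed

lemma SP_full:
  assumes "subring K R" "Z1 \<subseteq> K" "Z2 \<subseteq> K" "\<one> \<in> submod_prod R Z1 Z2"
  shows "submod_prod R K Z1 = K"
proof
  have K: "K \<subseteq> carrier R" using subringE(1)[OF assms(1)] by auto
  have XY: "Z1 \<subseteq> carrier R" "Z2 \<subseteq> carrier R" using assms K by auto
  show "submod_prod R K Z1 \<subseteq> K"
    by (rule SP_least[OF K XY(1)]) (use assms(2) subringE(2,6,7)[OF assms(1)] in auto)
  show "K \<subseteq> submod_prod R K Z1"
  proof
    fix k assume k: "k \<in> K"
    have "k \<otimes> z \<in> submod_prod R K Z1" if "z \<in> submod_prod R Z1 Z2" for z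
      using that XY
    proof (induction rule: SP_induct)
      case zero
      then show ?case using k K SP_zero by auto
    next
      case (step x y w)
      have c: "x \<in> carrier R" "y \<in> carrier R" "w \<in> carrier R" "k \<in> carrier R"
        using step XY SP_carrier[OF XY] k K by auto
      have "k \<otimes> (x \<otimes> y \<oplus> w) = (k \<otimes> y) \<otimes> x \<oplus> k \<otimes> w" using c by algebra
      moreover have "k \<otimes> y \<in> K" using subringE(6)[OF assms(1) k] step(2) assms(3) by auto
      ultimately show ?case using SP_cons[OF K XY(1) _ step(1) step(4)] by simp
    qed
    from this[OF assms(4)] show "k \<in> submod_prod R K Z1" using k K by auto
  qed
qed

lemma SP_PI_sub:
  assumes "subring K R" "subring K' R" "K' \<subseteq> K" "y \<in> carrier R"
  shows "submod_prod R K (PI K' y) = PI K y"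
proof -
  have K: "K \<subseteq> carrier R" "K' \<subseteq> carrier R" using assms subringE(1) by auto
  have "submod_prod R K (PI K' y) = submod_prod R (scl R y K') K"
    using SP_comm[OF K(1) sc_carrier[OF assms(4) K(2)]] PI_sc[OF K(2) assms(4)] by simp
  also have "\<dots> = scl R y (submod_prod R K' K)" using sc_SP[OF assms(4) K(2,1)] .
  also have "submod_prod R K' K = K" using SP_comm[OF K(2,1)] SP_sub_subring[OF assms(1-3)] by simp
  finally show ?thesis using PI_sc[OF K(1) assms(4)] by simp
qed

lemma core_step1:
  assumes c: "u \<in> carrier R" "v \<in> carrier R" "m \<in> carrier R" "m' \<in> carrier R" "f \<in> carrier R"
    and ff: "f \<otimes> f = f" and fz: "f \<otimes> (u \<otimes> v) = u \<otimes> v"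
  shows "(f \<otimes> u \<oplus> (\<one> \<ominus> f) \<otimes> m) \<otimes> (f \<otimes> v \<oplus> (\<one> \<ominus> f) \<otimes> m')
       = u \<otimes> v \<oplus> (\<one> \<ominus> f) \<otimes> (m \<otimes> m')"
proof -
  have e1: "f \<otimes> (\<one> \<ominus> f) = \<zero>" using c ff by algebra
  have e2: "(\<one> \<ominus> f) \<otimes> (\<one> \<ominus> f) = \<one> \<ominus> f" using c ff by algebra
  have "(f \<otimes> u \<oplus> (\<one> \<ominus> f) \<otimes> m) \<otimes> (f \<otimes> v \<oplus> (\<one> \<ominus> f) \<otimes> m')
    = (f \<otimes> f) \<otimes> (u \<otimes> v) \<oplus> (f \<otimes> (\<one> \<ominus> f)) \<otimes> (u \<otimes> m' \<oplus> m \<otimes> v) \<oplus> ((\<one> \<ominus> f) \<otimes> (\<one> \<ominus> f)) \<otimes> (m \<otimes> m')"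
    using c by algebra
  also have "\<dots> = u \<otimes> v \<oplus> (\<one> \<ominus> f) \<otimes> (m \<otimes> m')"
    unfolding e1 e2 ff fz using c by simp
  finally show ?thesis .
qed

lemma core_step2:
  assumes c: "z \<in> carrier R" "y \<in> carrier R" "c \<in> carrier R" "w \<in> carrier R" "w' \<in> carrier R"
    and f: "f = z \<otimes> w" and ff: "f \<otimes> f = f" and fz: "f \<otimes> z = z"
    and g: "g = ((\<one> \<ominus> f) \<otimes> y) \<otimes> w'" and gy: "g \<otimes> ((\<one> \<ominus> f) \<otimes> y) = (\<one> \<ominus> f) \<otimes> y"
  shows "y \<oplus> c \<otimes> z = ((c \<oplus> w \<otimes> y) \<otimes> f \<oplus> g) \<otimes> (z \<oplus> (\<one> \<ominus> f) \<otimes> y)"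
proof -
  have fc: "f \<in> carrier R" "g \<in> carrier R" using c f g by auto
  have e1: "f \<otimes> (\<one> \<ominus> f) = \<zero>" using fc ff by algebra
  have e3: "g \<otimes> z = \<zero>"
  proof -
    have "g \<otimes> z = ((\<one> \<ominus> f) \<otimes> z) \<otimes> (y \<otimes> w')" unfolding g using c fc by algebra
    also have "(\<one> \<ominus> f) \<otimes> z = \<zero>" using c fc fz by algebra
    finally show ?thesis using c by simp
  qed
  have "((c \<oplus> w \<otimes> y) \<otimes> f \<oplus> g) \<otimes> (z \<oplus> (\<one> \<ominus> f) \<otimes> y)
     = (c \<oplus> w \<otimes> y) \<otimes> (f \<otimes> z) \<oplus> (c \<oplus> w \<otimes> y) \<otimes> y \<otimes> (f \<otimes> (\<one> \<ominus> f)) \<oplus> g \<otimes> z \<oplus> g \<otimes> ((\<one> \<ominus> f) \<otimes> y)"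
    using c fc by algebra
  also have "\<dots> = (c \<oplus> w \<otimes> y) \<otimes> z \<oplus> (\<one> \<ominus> f) \<otimes> y"
    unfolding fz e1 e3 gy using c fc by simp
  also have "\<dots> = y \<oplus> c \<otimes> z" unfolding f using c by algebra
  finally show ?thesis by simp
qed

lemma core_lemma:
  assumes K: "subring K R"
    and vn: "\<And>x. x \<in> K \<Longrightarrow> \<exists>y\<in>K. x = x \<otimes> x \<otimes> y"
    and M: "R_submod R K M" and M': "R_submod R K M'"
    and MM: "submod_prod R M M' = K"
  shows "\<exists>u\<in>Units R. M = PI K u"
proof -
  have Kc: "K \<subseteq> carrier R" using subringE(1)[OF K] .
  have Mc: "M \<subseteq> carrier R" "M' \<subseteq> carrier R" using M M' submod_carrier by auto
  have M0: "\<zero> \<in> M" "\<zero> \<in> M'" using M M' unfolding R_submod_def by auto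
  have Madd: "a \<oplus> b \<in> M" if "a \<in> M" "b \<in> M" for a b using M that unfolding R_submod_def by auto
  have Madd': "a \<oplus> b \<in> M'" if "a \<in> M'" "b \<in> M'" for a b using M' that unfolding R_submod_def by auto
  have Msm: "r \<otimes> a \<in> M" if "r \<in> K" "a \<in> M" for r a using M that unfolding R_submod_def by auto
  have Msm': "r \<otimes> a \<in> M'" if "r \<in> K" "a \<in> M'" for r a using M' that unfolding R_submod_def by auto
  have prodK: "a \<otimes> b \<in> K" if "a \<in> M" "b \<in> M'" for a b using SP_mem[OF Mc that] MM by simp
  have Kmult: "a \<otimes> b \<in> K" if "a \<in> K" "b \<in> K" for a b using subringE(6)[OF K that] .
  have Kadd: "a \<oplus> b \<in> K" if "a \<in> K" "b \<in> K" for a b using subringE(7)[OF K that] .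
  have Kminus: "a \<ominus> b \<in> K" if "a \<in> K" "b \<in> K" for a b
    using subringE(5,7)[OF K] that by (simp add: minus_eq)
  have K1: "\<one> \<in> K" using subringE(3)[OF K] .
  have K0: "\<zero> \<in> K" using subringE(2)[OF K] .
  have P: "\<exists>u\<in>M. \<exists>v\<in>M'. \<exists>c\<in>K. s = c \<otimes> (u \<otimes> v)" if "s \<in> submod_prod R M M'" for s
    using that Mc
  proof (induction rule: SP_induct)
    case zero
    show ?case using M0 K0 by (intro bexI[of _ \<zero>]) auto
  next
    case (step m m' s)
    from step.IH obtain u v c where uvc: "u \<in> M" "v \<in> M'" "c \<in> K" "s = c \<otimes> (u \<otimes> v)" by blast
    have cu: "u \<in> carrier R" "v \<in> carrier R" "c \<in> carrier R" "m \<in> carrier R" "m' \<in> carrier R"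
      using uvc step Mc Kc by auto
    define z where "z = u \<otimes> v"
    define y where "y = m \<otimes> m'"
    have zK: "z \<in> K" "y \<in> K" unfolding z_def y_def using prodK uvc step by auto
    obtain w where w: "w \<in> K" "z = z \<otimes> z \<otimes> w" using vn[OF zK(1)] by blast
    define f where "f = z \<otimes> w"
    have fK: "f \<in> K" unfolding f_def using Kmult zK w by auto
    have cc: "z \<in> carrier R" "y \<in> carrier R" "w \<in> carrier R" "f \<in> carrier R" using zK w fK Kc by auto
    have fz: "f \<otimes> z = z" using w(2) cc unfolding f_def by (metis m_assoc m_comm m_closed)
    have ff: "f \<otimes> f = f"
    proof -
      have "f \<otimes> f = (f \<otimes> z) \<otimes> w" unfolding f_def using cc by (simp add: m_ac)
      then show ?thesis using fz f_def by simp
    qed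
    define y' where "y' = (\<one> \<ominus> f) \<otimes> y"
    have y'K: "y' \<in> K" unfolding y'_def using Kmult Kminus K1 fK zK by auto
    obtain w' where w': "w' \<in> K" "y' = y' \<otimes> y' \<otimes> w'" using vn[OF y'K] by blast
    define g where "g = y' \<otimes> w'"
    have gK: "g \<in> K" unfolding g_def using Kmult y'K w' by auto
    have cc2: "y' \<in> carrier R" "w' \<in> carrier R" "g \<in> carrier R" using y'K w' gK Kc by auto
    have gy: "g \<otimes> y' = y'" using w'(2) cc2 unfolding g_def by (metis m_assoc m_comm m_closed)
    define u2 where "u2 = f \<otimes> u \<oplus> (\<one> \<ominus> f) \<otimes> m"
    define v2 where "v2 = f \<otimes> v \<oplus> (\<one> \<ominus> f) \<otimes> m'"
    define c2 where "c2 = (c \<oplus> w \<otimes> y) \<otimes> f \<oplus> g"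
    have u2M: "u2 \<in> M" unfolding u2_def using Madd Msm fK Kminus K1 uvc step by auto
    have v2M: "v2 \<in> M'" unfolding v2_def using Madd' Msm' fK Kminus K1 uvc step by auto
    have c2K: "c2 \<in> K" unfolding c2_def using Kadd Kmult uvc w zK fK gK by auto
    have e1: "u2 \<otimes> v2 = z \<oplus> (\<one> \<ominus> f) \<otimes> y"
      unfolding u2_def v2_def z_def y_def
      by (rule core_step1) (use cu cc fz ff in \<open>auto simp: z_def\<close>)
    have e2: "y \<oplus> c \<otimes> z = c2 \<otimes> (z \<oplus> (\<one> \<ominus> f) \<otimes> y)"
      unfolding c2_def
      by (rule core_step2[OF cc(1,2) cu(3) cc(3) cc2(2) f_def ff fz]) (use g_def y'_def gy in auto)
    have "m \<otimes> m' \<oplus> s = c2 \<otimes> (u2 \<otimes> v2)"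
      using e1 e2 uvc(4) unfolding y_def z_def by simp
    then show ?case using u2M v2M c2K by blast
  qed
  obtain u v c where uvc: "u \<in> M" "v \<in> M'" "c \<in> K" "\<one> = c \<otimes> (u \<otimes> v)"
    using P[of \<one>] MM K1 by blast
  have cu: "u \<in> carrier R" "v \<in> carrier R" "c \<in> carrier R" using uvc Mc Kc by auto
  have inv1: "(c \<otimes> v) \<otimes> u = \<one>" using uvc(4) cu by (simp add: m_ac)
  have uU: "u \<in> Units R" unfolding Units_def using inv1 cu by (auto simp: m_comm intro!: bexI[of _ "c \<otimes> v"])
  have "M = PI K u"
  proof
    show "PI K u \<subseteq> M" unfolding PI_def using Msm uvc(1) by auto
    show "M \<subseteq> PI K u"
    proof
      fix x assume x: "x \<in> M"
      have xc: "x \<in> carrier R" using x Mc by auto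
      have "x = ((x \<otimes> v) \<otimes> c) \<otimes> u" using inv1 xc cu
        by (metis m_assoc m_closed m_comm r_one)
      moreover have "(x \<otimes> v) \<otimes> c \<in> K" using Kmult prodK[OF x uvc(2)] uvc(3) by auto
      ultimately show "x \<in> PI K u" unfolding PI_def by blast
    qed
  qed
  then show ?thesis using uU by blast
qed

end

context ring_hom_cring
begin

lemma hSP:
  assumes Z1: "Z1 \<subseteq> carrier R" and Z2: "Z2 \<subseteq> carrier R"
  shows "h ` submod_prod R Z1 Z2 = submod_prod S (h ` Z1) (h ` Z2)"
proof
  have hZ: "h ` Z1 \<subseteq> carrier S" "h ` Z2 \<subseteq> carrier S" using Z1 Z2 by auto
  show "h ` submod_prod R Z1 Z2 \<subseteq> submod_prod S (h ` Z1) (h ` Z2)"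
  proof
    fix z assume "z \<in> h ` submod_prod R Z1 Z2"
    then obtain w where w: "w \<in> submod_prod R Z1 Z2" "z = h w" by auto
    have "h w \<in> submod_prod S (h ` Z1) (h ` Z2)" using w(1) Z1 Z2
    proof (induction rule: R.SP_induct)
      case zero
      then show ?case using S.SP_zero by simp
    next
      case (step x y w)
      have c: "x \<in> carrier R" "y \<in> carrier R" "w \<in> carrier R" using step Z1 Z2 R.SP_carrier[OF Z1 Z2] by auto
      have "h (x \<otimes> y \<oplus> w) = h x \<otimes>\<^bsub>S\<^esub> h y \<oplus>\<^bsub>S\<^esub> h w" using c by simp
      then show ?case using S.SP_cons[OF hZ imageI[OF step(1)] imageI[OF step(2)] step(4)] by simp
    qed
    then show "z \<in> submod_prod S (h ` Z1) (h ` Z2)" using w by simp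
  qed
  show "submod_prod S (h ` Z1) (h ` Z2) \<subseteq> h ` submod_prod R Z1 Z2"
  proof
    fix z assume "z \<in> submod_prod S (h ` Z1) (h ` Z2)"
    then show "z \<in> h ` submod_prod R Z1 Z2" using hZ
    proof (induction rule: S.SP_induct)
      case zero
      then show ?case using R.SP_zero by (auto intro!: image_eqI[of _ _ \<zero>])
    next
      case (step x y w)
      obtain x' y' w' where xyw: "x' \<in> Z1" "y' \<in> Z2" "w' \<in> submod_prod R Z1 Z2" "x = h x'" "y = h y'" "w = h w'"
        using step by auto
      have c: "x' \<in> carrier R" "y' \<in> carrier R" "w' \<in> carrier R" using xyw Z1 Z2 R.SP_carrier[OF Z1 Z2] by auto
      have "x \<otimes>\<^bsub>S\<^esub> y \<oplus>\<^bsub>S\<^esub> w = h (x' \<otimes> y' \<oplus> w')" using c xyw by simp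
      then show ?case using R.SP_cons[OF Z1 Z2 xyw(1,2,3)] by auto
    qed
  qed
qed

lemma hsubmod:
  assumes "R_submod R K Z" "K \<subseteq> carrier R"
  shows "R_submod S (h ` K) (h ` Z)"
proof -
  have Z: "Z \<subseteq> carrier R" using assms(1) unfolding R_submod_def by auto
  show ?thesis unfolding R_submod_def
  proof (intro conjI ballI)
    show "h ` Z \<subseteq> carrier S" using Z by auto
    show "\<zero>\<^bsub>S\<^esub> \<in> h ` Z" using assms(1) unfolding R_submod_def by (auto intro!: image_eqI[of _ _ \<zero>])
    fix a b assume "a \<in> h ` Z" "b \<in> h ` Z"
    then obtain a' b' where ab: "a' \<in> Z" "b' \<in> Z" "a = h a'" "b = h b'" by auto
    have "a' \<in> carrier R" "b' \<in> carrier R" using ab Z by auto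
    then have "a \<oplus>\<^bsub>S\<^esub> b = h (a' \<oplus> b')" using ab by simp
    moreover have "a' \<oplus> b' \<in> Z" using ab assms(1) unfolding R_submod_def by auto
    ultimately show "a \<oplus>\<^bsub>S\<^esub> b \<in> h ` Z" by auto
  next
    fix a b assume "a \<in> h ` K" "b \<in> h ` Z"
    then obtain a' b' where ab: "a' \<in> K" "b' \<in> Z" "a = h a'" "b = h b'" by auto
    have "a' \<in> carrier R" "b' \<in> carrier R" using ab Z assms(2) by auto
    then have "a \<otimes>\<^bsub>S\<^esub> b = h (a' \<otimes> b')" using ab by simp
    moreover have "a' \<otimes> b' \<in> Z" using ab assms(1) unfolding R_submod_def by auto
    ultimately show "a \<otimes>\<^bsub>S\<^esub> b \<in> h ` Z" by auto
  qed
qed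

lemma hscl:
  assumes "u \<in> carrier R" "Z \<subseteq> carrier R"
  shows "h ` scl R u Z = scl S (h u) (h ` Z)"
proof -
  have "h ` scl R u Z = (\<lambda>x. h (u \<otimes> x)) ` Z" unfolding scl_def image_image ..
  also have "\<dots> = (\<lambda>x. h u \<otimes>\<^bsub>S\<^esub> h x) ` Z" using assms by (intro image_cong) auto
  finally show ?thesis unfolding scl_def image_image .
qed

lemma hPI:
  assumes "u \<in> carrier R" "K \<subseteq> carrier R"
  shows "h ` R.PI K u = S.PI (h ` K) (h u)"
proof -
  have "h ` K \<subseteq> carrier S" using assms by auto
  then show ?thesis using hscl[OF assms] R.PI_sc[OF assms(2,1)] S.PI_sc[of "h ` K" "h u"] assms by simp
qed

lemma hUnits:
  assumes "u \<in> Units R"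
  shows "h u \<in> Units S" "h (inv u) = inv\<^bsub>S\<^esub> (h u)"
proof -
  have c: "u \<in> carrier R" "inv u \<in> carrier R" using assms by auto
  have e: "h u \<otimes>\<^bsub>S\<^esub> h (inv u) = \<one>\<^bsub>S\<^esub>" using c assms
    by (metis R.Units_r_inv hom_mult hom_one)
  then show "h u \<in> Units S" unfolding Units_def using c S.m_comm by (auto intro!: bexI[of _ "h (inv u)"])
  show "h (inv u) = inv\<^bsub>S\<^esub> (h u)" using S.comm_inv_char[OF _ _ e] c by simp
qed

lemma hpre:
  assumes inj: "inj_on h (carrier R)" and K: "K \<subseteq> carrier R"
    and Z: "R_submod S (h ` K) Z" "Z \<subseteq> h ` carrier R"
  shows "R_submod R K {x \<in> carrier R. h x \<in> Z}" "h ` {x \<in> carrier R. h x \<in> Z} = Z"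
proof -
  show "h ` {x \<in> carrier R. h x \<in> Z} = Z" using Z(2) by auto
  show "R_submod R K {x \<in> carrier R. h x \<in> Z}" unfolding R_submod_def
  proof (intro conjI ballI)
    show "{x \<in> carrier R. h x \<in> Z} \<subseteq> carrier R" by auto
    show "\<zero> \<in> {x \<in> carrier R. h x \<in> Z}" using Z(1) unfolding R_submod_def by auto
    fix a b assume "a \<in> {x \<in> carrier R. h x \<in> Z}" "b \<in> {x \<in> carrier R. h x \<in> Z}"
    then show "a \<oplus> b \<in> {x \<in> carrier R. h x \<in> Z}" using Z(1) unfolding R_submod_def by auto
  next
    fix a b assume "a \<in> K" "b \<in> {x \<in> carrier R. h x \<in> Z}"
    then show "a \<otimes> b \<in> {x \<in> carrier R. h x \<in> Z}" using Z(1) K unfolding R_submod_def by auto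
  qed
qed

end

context cring
begin

lemma ideal_chain_Union:
  assumes ne: "C \<noteq> {}" and id: "\<And>I. I \<in> C \<Longrightarrow> ideal I R"
    and ch: "\<And>I J. I \<in> C \<Longrightarrow> J \<in> C \<Longrightarrow> I \<subseteq> J \<or> J \<subseteq> I"
  shows "ideal (\<Union>C) R"
proof (rule idealI)
  show "ring R" by (rule ring_axioms)
  show "subgroup (\<Union>C) (add_monoid R)"
  proof (rule add.subgroupI)
    show "\<Union>C \<subseteq> carrier R" using id ideal.Icarr by fastforce
    show "\<Union>C \<noteq> {}" using ne id additive_subgroup.zero_closed[OF ideal.axioms(1)] by blast
  next
    fix a assume "a \<in> \<Union>C"
    then obtain I where "I \<in> C" "a \<in> I" by auto
    then show "\<ominus> a \<in> \<Union>C"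
      using additive_subgroup.a_inv_closed[OF ideal.axioms(1)[OF id]] by auto
  next
    fix a b assume "a \<in> \<Union>C" "b \<in> \<Union>C"
    then obtain I J where IJ: "I \<in> C" "a \<in> I" "J \<in> C" "b \<in> J" by auto
    have "a \<oplus> b \<in> I" if "J \<subseteq> I"
      using IJ that additive_subgroup.a_closed[OF ideal.axioms(1)[OF id[OF IJ(1)]]] by auto
    moreover have "a \<oplus> b \<in> J" if "I \<subseteq> J"
      using IJ that additive_subgroup.a_closed[OF ideal.axioms(1)[OF id[OF IJ(3)]]] by auto
    ultimately show "a \<oplus> b \<in> \<Union>C" using ch[OF IJ(1,3)] IJ by blast
  qed
next
  fix a x assume "a \<in> \<Union>C" "x \<in> carrier R"
  then show "x \<otimes> a \<in> \<Union>C" using id ideal.I_l_closed by fastforce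
next
  fix a x assume "a \<in> \<Union>C" "x \<in> carrier R"
  then show "a \<otimes> x \<in> \<Union>C" using id ideal.I_r_closed by fastforce
qed

lemma set_add_PIdl:
  assumes "ideal I R" "a \<in> carrier R"
  shows "z \<in> I <+> PIdl a \<longleftrightarrow> (\<exists>i\<in>I. \<exists>r\<in>carrier R. z = i \<oplus> r \<otimes> a)"
  unfolding set_add_def set_mult_def cgenideal_def by auto

lemma prime_avoiding:
  assumes red: "reduced R" and x: "x \<in> carrier R" "x \<noteq> \<zero>"
  shows "\<exists>P. primeideal P R \<and> x \<notin> P"
proof -
  have pw: "x [^] (n::nat) \<noteq> \<zero>" for n using red x unfolding reduced_def by auto
  define A where "A = {I. ideal I R \<and> (\<forall>n::nat. x [^] n \<notin> I)}"
  have "\<exists>M\<in>A. \<forall>J\<in>A. M \<subseteq> J \<longrightarrow> J = M"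
  proof (rule subset_Zorn_nonempty)
    show "A \<noteq> {}" unfolding A_def using zeroideal pw by auto
    fix C assume C: "C \<noteq> {}" "subset.chain A C"
    have "ideal (\<Union>C) R"
      by (rule ideal_chain_Union[OF C(1)]) (use C(2) in \<open>auto simp: subset_chain_def A_def\<close>)
    then show "\<Union>C \<in> A" using C(2) unfolding subset_chain_def A_def by auto
  qed
  then obtain M where M: "ideal M R" "\<And>n::nat. x [^] n \<notin> M"
    and Mmax: "\<And>J. ideal J R \<Longrightarrow> (\<forall>n::nat. x [^] n \<notin> J) \<Longrightarrow> M \<subseteq> J \<Longrightarrow> J = M"
    unfolding A_def by auto
  have "primeideal M R"
  proof (rule primeidealI[OF M(1) is_cring])
    show "carrier R \<noteq> M" using M(2)[of 0] by auto
    fix a b assume ab: "a \<in> carrier R" "b \<in> carrier R" "a \<otimes> b \<in> M"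
    show "a \<in> M \<or> b \<in> M"
    proof (rule ccontr)
      assume nab: "\<not> (a \<in> M \<or> b \<in> M)"
      have ext: "\<exists>n::nat. \<exists>i\<in>M. \<exists>r\<in>carrier R. x [^] n = i \<oplus> r \<otimes> c"
        if c: "c \<in> carrier R" "c \<notin> M" for c
      proof -
        have J: "ideal (M <+> PIdl c) R" using add_ideals[OF M(1) cgenideal_ideal[OF c(1)]] .
        have M0: "\<zero> \<in> M" using additive_subgroup.zero_closed[OF ideal.axioms(1)[OF M(1)]] .
        have "M \<subseteq> M <+> PIdl c"
        proof
          fix m assume m: "m \<in> M"
          then have "m \<in> carrier R" using ideal.Icarr[OF M(1)] by auto
          then have "m = m \<oplus> \<zero> \<otimes> c" using c by simp
          then show "m \<in> M <+> PIdl c" using set_add_PIdl[OF M(1) c(1)] m by blast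
        qed
        moreover have "c = \<zero> \<oplus> \<one> \<otimes> c" using c by simp
        then have "c \<in> M <+> PIdl c" using set_add_PIdl[OF M(1) c(1)] M0 by blast
        ultimately have "\<not> (\<forall>n::nat. x [^] n \<notin> M <+> PIdl c)" using Mmax[OF J] c(2) by blast
        then show ?thesis using set_add_PIdl[OF M(1) c(1)] by blast
      qed
      obtain n i r where nir: "i \<in> M" "r \<in> carrier R" "x [^] (n::nat) = i \<oplus> r \<otimes> a"
        using ext[of a] ab nab by blast
      obtain k j s where kjs: "j \<in> M" "s \<in> carrier R" "x [^] (k::nat) = j \<oplus> s \<otimes> b"
        using ext[of b] ab nab by blast
      have ic: "i \<in> carrier R" "j \<in> carrier R" using ideal.Icarr[OF M(1)] nir(1) kjs(1) by auto
      have "x [^] (n + k) = x [^] n \<otimes> x [^] k" using x by (simp add: nat_pow_mult)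
      also have "\<dots> = i \<otimes> (j \<oplus> s \<otimes> b) \<oplus> (r \<otimes> a) \<otimes> j \<oplus> (r \<otimes> s) \<otimes> (a \<otimes> b)"
        unfolding nir(3) kjs(3) using ic nir kjs ab by algebra
      moreover have "i \<otimes> (j \<oplus> s \<otimes> b) \<in> M" using ideal.I_r_closed[OF M(1) nir(1)] ic kjs ab by simp
      moreover have "(r \<otimes> a) \<otimes> j \<in> M" using ideal.I_l_closed[OF M(1) kjs(1)] nir ab by simp
      moreover have "(r \<otimes> s) \<otimes> (a \<otimes> b) \<in> M" using ideal.I_l_closed[OF M(1) ab(3)] nir kjs by simp
      ultimately have "x [^] (n + k) \<in> M"
        using additive_subgroup.a_closed[OF ideal.axioms(1)[OF M(1)]] by simp
      then show False using M(2) by blast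
    qed
  qed
  moreover have "x \<notin> M" using M(2)[of 1] x by simp
  ultimately show ?thesis by blast
qed

lemma primeideal_one_notin: "primeideal P R \<Longrightarrow> \<one> \<notin> P"
  using ideal.one_imp_carrier primeideal.I_notcarr primeideal.axioms(1) by metis

lemma minimal_prime_below:
  assumes P: "primeideal P R"
  shows "\<exists>Q\<in>minimal_primes R. Q \<subseteq> P"
proof -
  define A where "A = {Q. primeideal Q R \<and> Q \<subseteq> P}"
  have "\<exists>m\<in>A. \<forall>a\<in>A. a \<subseteq> m \<longrightarrow> a = m"
  proof (rule predicate_Zorn[where P = "\<lambda>a b. b \<subseteq> a"])
    show "partial_order_on A (relation_of (\<lambda>a b. b \<subseteq> a) A)"
      by (rule partial_order_on_relation_ofI) auto
    fix C assume C: "C \<in> Chains (relation_of (\<lambda>a b. b \<subseteq> a) A)"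
    have CA: "C \<subseteq> A" using Chains_relation_of[OF C] .
    have cmp: "I \<subseteq> J \<or> J \<subseteq> I" if "I \<in> C" "J \<in> C" for I J
      using C that unfolding Chains_def relation_of_def by auto
    show "\<exists>u\<in>A. \<forall>a\<in>C. u \<subseteq> a"
    proof (cases "C = {}")
      case True
      then show ?thesis using P unfolding A_def by auto
    next
      case False
      have pr: "primeideal Q R" if "Q \<in> C" for Q using that CA unfolding A_def by auto
      have "primeideal (\<Inter>C) R"
      proof (rule primeidealI[OF i_Intersect is_cring])
        show "ideal I R" if "I \<in> C" for I using pr[OF that] primeideal.axioms(1) by blast
        show "C \<noteq> {}" by fact
        show "carrier R \<noteq> \<Inter>C" using False pr primeideal_one_notin by blast
        fix a b assume ab: "a \<in> carrier R" "b \<in> carrier R" "a \<otimes> b \<in> \<Inter>C"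
        show "a \<in> \<Inter>C \<or> b \<in> \<Inter>C"
        proof (rule ccontr)
          assume "\<not> (a \<in> \<Inter>C \<or> b \<in> \<Inter>C)"
          then obtain Q1 Q2 where Q: "Q1 \<in> C" "a \<notin> Q1" "Q2 \<in> C" "b \<notin> Q2" by auto
          show False
          proof (cases "Q1 \<subseteq> Q2")
            case True
            then show ?thesis using Q ab primeideal.I_prime[OF pr[OF Q(1)]] by blast
          next
            case False
            then have "Q2 \<subseteq> Q1" using cmp Q by blast
            then show ?thesis using Q ab primeideal.I_prime[OF pr[OF Q(3)]] by blast
          qed
        qed
      qed
      moreover have "\<Inter>C \<subseteq> P" using False CA unfolding A_def by auto
      ultimately show ?thesis unfolding A_def by auto
    qed
  qed
  then obtain m where m: "primeideal m R" "m \<subseteq> P" "\<And>a. primeideal a R \<Longrightarrow> a \<subseteq> P \<Longrightarrow> a \<subseteq> m \<Longrightarrow> a = m"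
    unfolding A_def by auto
  have "m \<in> minimal_primes R" unfolding minimal_primes_def using m by auto
  then show ?thesis using m(2) by blast
qed

lemma in_all_minimal_zero:
  assumes red: "reduced R" and x: "x \<in> carrier R" and all: "\<forall>P\<in>minimal_primes R. x \<in> P"
  shows "x = \<zero>"
proof (rule ccontr)
  assume "x \<noteq> \<zero>"
  then obtain P where P: "primeideal P R" "x \<notin> P" using prime_avoiding red x by blast
  obtain Q where "Q \<in> minimal_primes R" "Q \<subseteq> P" using minimal_prime_below[OF P(1)] by blast
  then show False using all P(2) by blast
qed

lemma avoid_one:
  assumes Q: "primeideal Q R" and F: "finite F"
    and FP: "\<And>P. P \<in> F \<Longrightarrow> primeideal P R \<and> \<not> P \<subseteq> Q"
  shows "\<exists>c\<in>carrier R. c \<notin> Q \<and> (\<forall>P\<in>F. c \<in> P)"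
  using F FP
proof (induction F rule: finite_induct)
  case empty
  then show ?case using primeideal_one_notin[OF Q] by auto
next
  case (insert P F)
  then obtain c where c: "c \<in> carrier R" "c \<notin> Q" "\<forall>P\<in>F. c \<in> P" by blast
  have P: "primeideal P R" "\<not> P \<subseteq> Q" using insert.prems[of P] by simp_all
  then obtain x where x: "x \<in> P" "x \<notin> Q" by auto
  have xc: "x \<in> carrier R" using ideal.Icarr[OF primeideal.axioms(1)[OF P(1)] x(1)] .
  have "c \<otimes> x \<notin> Q" using primeideal.I_prime[OF Q c(1) xc] c x by auto
  moreover have "c \<otimes> x \<in> P" using ideal.I_l_closed[OF primeideal.axioms(1)[OF P(1)] x(1) c(1)] .
  moreover have "c \<otimes> x \<in> P'" if "P' \<in> F" for P'
  proof -
    have "primeideal P' R" using insert.prems[of P'] that by simp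
    moreover have "c \<in> P'" using c(3) that by simp
    ultimately show ?thesis using ideal.I_r_closed[OF primeideal.axioms(1), of P' R c x] xc by simp
  qed
  moreover have "c \<otimes> x \<in> carrier R" using c xc by simp
  ultimately show ?case by (intro bexI[of _ "c \<otimes> x"]) simp_all
qed

lemma minimal_distinct_sep:
  assumes fin: "finite (minimal_primes R)" and Q: "Q \<in> minimal_primes R"
  shows "\<exists>d\<in>carrier R. d \<notin> Q \<and> (\<forall>P\<in>minimal_primes R - {Q}. d \<in> P)"
proof (rule avoid_one)
  show "primeideal Q R" using Q unfolding minimal_primes_def by auto
  show "finite (minimal_primes R - {Q})" using fin by auto
  fix P assume P: "P \<in> minimal_primes R - {Q}"
  have P1: "primeideal P R" "P \<noteq> Q" using P unfolding minimal_primes_def by auto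
  have Q1: "\<And>Q'. primeideal Q' R \<Longrightarrow> Q' \<subseteq> Q \<Longrightarrow> Q' = Q" using Q unfolding minimal_primes_def by blast
  show "primeideal P R \<and> \<not> P \<subseteq> Q" using P1 Q1[OF P1(1)] by blast
qed

lemma mp_prime: assumes "P \<in> minimal_primes R" shows "primeideal P R"
  using assms unfolding minimal_primes_def by simp

lemma mp_ideal: assumes "P \<in> minimal_primes R" shows "ideal P R"
  using primeideal.axioms(1)[OF mp_prime[OF assms]] .

lemma ideal_add: assumes "ideal P R" "x \<in> P" "y \<in> P" shows "x \<oplus> y \<in> P"
  using additive_subgroup.a_closed[OF ideal.axioms(1)[OF assms(1)] assms(2,3)] .

lemma ideal_diff: assumes "ideal P R" "x \<in> P" "y \<in> P" shows "x \<ominus> y \<in> P"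
  unfolding minus_eq
  using ideal_add[OF assms(1,2) additive_subgroup.a_inv_closed[OF ideal.axioms(1)[OF assms(1)] assms(3)]] .

lemma ideal_zero: assumes "ideal P R" shows "\<zero> \<in> P"
  using additive_subgroup.zero_closed[OF ideal.axioms(1)[OF assms]] .

lemma build_c:
  assumes fin: "finite (minimal_primes R)" and G: "G \<subseteq> minimal_primes R"
  shows "\<exists>c\<in>carrier R. \<forall>P\<in>minimal_primes R. (P \<in> G \<longrightarrow> c \<notin> P) \<and> (P \<notin> G \<longrightarrow> c \<in> P)"
proof -
  have "finite G" using finite_subset[OF G fin] .
  then show ?thesis using G
  proof (induction G rule: finite_induct)
    case empty
    have "\<zero> \<in> P" if "P \<in> minimal_primes R" for P
      using ideal_zero[OF mp_ideal[OF that]] .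
    then show ?case by blast
  next
    case (insert Q G)
    have GG: "G \<subseteq> minimal_primes R" using insert.prems by simp
    obtain c where c: "c \<in> carrier R" "\<And>P. P \<in> minimal_primes R \<Longrightarrow> (P \<in> G \<longrightarrow> c \<notin> P) \<and> (P \<notin> G \<longrightarrow> c \<in> P)"
      using insert.IH[OF GG] by blast
    have Q: "Q \<in> minimal_primes R" using insert.prems by simp
    obtain d where d: "d \<in> carrier R" "d \<notin> Q" "\<And>P. P \<in> minimal_primes R - {Q} \<Longrightarrow> d \<in> P"
      using minimal_distinct_sep[OF fin Q] by blast
    have "(P \<in> insert Q G \<longrightarrow> c \<oplus> d \<notin> P) \<and> (P \<notin> insert Q G \<longrightarrow> c \<oplus> d \<in> P)"
      if P: "P \<in> minimal_primes R" for P
    proof -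
      have I: "ideal P R" using mp_ideal[OF P] .
      have sub: "c \<oplus> d \<notin> P" if "c \<in> P" "d \<notin> P"
      proof
        assume "c \<oplus> d \<in> P"
        then have "(c \<oplus> d) \<ominus> c \<in> P" using ideal_diff[OF I] that(1) by blast
        moreover have "(c \<oplus> d) \<ominus> c = d" using c d by algebra
        ultimately show False using that by simp
      qed
      have sub2: "c \<oplus> d \<notin> P" if "c \<notin> P" "d \<in> P"
      proof
        assume "c \<oplus> d \<in> P"
        then have "(c \<oplus> d) \<ominus> d \<in> P" using ideal_diff[OF I] that(2) by blast
        moreover have "(c \<oplus> d) \<ominus> d = c" using c d by algebra
        ultimately show False using that by simp
      qed
      show ?thesis
      proof (cases "P = Q")
        case True
        then have "c \<in> P" using c(2)[OF P] insert.hyps(2) by blast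
        then have "c \<oplus> d \<notin> P" using sub d(2) True by blast
        then show ?thesis using True by blast
      next
        case False
        then have dP: "d \<in> P" using d(3) P by blast
        show ?thesis
        proof (cases "P \<in> G")
          case True
          then have "c \<notin> P" using c(2)[OF P] by blast
          then show ?thesis using sub2 dP True by blast
        next
          case nG: False
          then have "c \<in> P" using c(2)[OF P] by blast
          then have "c \<oplus> d \<in> P" using ideal_add[OF I] dP by blast
          then show ?thesis using nG False by blast
        qed
      qed
    qed
    moreover have "c \<oplus> d \<in> carrier R" using c d by simp
    ultimately show ?case by blast
  qed
qed

lemma vn_lemma:
  assumes red: "reduced R" and fin: "finite (minimal_primes R)" and a: "a \<in> carrier R"
  shows "\<exists>t. nzd R t \<and> a \<otimes> t = a \<otimes> a"
proof -
  define G where "G = {P\<in>minimal_primes R. a \<in> P}"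
  have GG: "G \<subseteq> minimal_primes R" unfolding G_def by blast
  obtain c where c: "c \<in> carrier R" "\<And>P. P \<in> minimal_primes R \<Longrightarrow> (P \<in> G \<longrightarrow> c \<notin> P) \<and> (P \<notin> G \<longrightarrow> c \<in> P)"
    using build_c[OF fin GG] by blast
  have cP1: "c \<notin> P" if "P \<in> minimal_primes R" "a \<in> P" for P
    using c(2)[OF that(1)] that unfolding G_def by blast
  have cP2: "c \<in> P" if "P \<in> minimal_primes R" "a \<notin> P" for P
    using c(2)[OF that(1)] that unfolding G_def by blast
  have ac0: "a \<otimes> c = \<zero>"
  proof (rule in_all_minimal_zero[OF red])
    show "a \<otimes> c \<in> carrier R" using a c by simp
    show "\<forall>P\<in>minimal_primes R. a \<otimes> c \<in> P"
    proof
      fix P assume P: "P \<in> minimal_primes R"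
      have I: "ideal P R" using mp_ideal[OF P] .
      show "a \<otimes> c \<in> P"
      proof (cases "a \<in> P")
        case True
        then show ?thesis using ideal.I_r_closed[OF I True c(1)] by simp
      next
        case False
        then have "c \<in> P" using cP2 P by blast
        then show ?thesis using ideal.I_l_closed[OF I _ a] by simp
      qed
    qed
  qed
  define t where "t = a \<oplus> c"
  have tc: "t \<in> carrier R" unfolding t_def using a c by simp
  have e1: "t \<ominus> a = c" "t \<ominus> c = a" unfolding t_def using a c(1) by algebra+
  have tP: "t \<notin> P" if P: "P \<in> minimal_primes R" for P
  proof
    assume tP: "t \<in> P"
    have I: "ideal P R" using mp_ideal[OF P] .
    show False
    proof (cases "a \<in> P")
      case True
      then have "c \<notin> P" using cP1 P by blast
      then show False using ideal_diff[OF I tP True] e1 by simp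
    next
      case False
      then have "c \<in> P" using cP2 P by blast
      then show False using ideal_diff[OF I tP \<open>c \<in> P\<close>] e1 False by simp
    qed
  qed
  have "nzd R t" unfolding nzd_def
  proof (intro conjI ballI impI)
    show "t \<in> carrier R" by fact
    fix y assume y: "y \<in> carrier R" "t \<otimes> y = \<zero>"
    show "y = \<zero>"
    proof (rule in_all_minimal_zero[OF red y(1)])
      show "\<forall>P\<in>minimal_primes R. y \<in> P"
      proof
        fix P assume P: "P \<in> minimal_primes R"
        have pr: "primeideal P R" using mp_prime[OF P] .
        have "t \<otimes> y \<in> P" using y(2) ideal_zero[OF mp_ideal[OF P]] by simp
        then show "y \<in> P" using primeideal.I_prime[OF pr tc y(1)] tP[OF P] by blast
      qed
    qed
  qed
  moreover have "a \<otimes> t = a \<otimes> a" unfolding t_def using a c ac0 by (simp add: r_distr)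
  ultimately show ?thesis by blast
qed

end

context cring
begin

lemma SP_KK:
  assumes K: "subring K R" and Z1: "Z1 \<subseteq> carrier R" and Z2: "Z2 \<subseteq> carrier R"
  shows "submod_prod R (submod_prod R K Z1) (submod_prod R K Z2) = submod_prod R K (submod_prod R Z1 Z2)"
proof -
  have Kc: "K \<subseteq> carrier R" using subringE(1)[OF K] .
  have c1: "submod_prod R K Z1 \<subseteq> carrier R" "submod_prod R K Z2 \<subseteq> carrier R"
    "submod_prod R Z1 Z2 \<subseteq> carrier R" "submod_prod R Z1 K \<subseteq> carrier R"
    using SP_carrier Kc Z1 Z2 by auto
  have "submod_prod R (submod_prod R K Z1) (submod_prod R K Z2)
      = submod_prod R K (submod_prod R Z1 (submod_prod R K Z2))"
    using SP_assoc[OF Kc Z1 c1(2)] .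
  also have "submod_prod R Z1 (submod_prod R K Z2) = submod_prod R (submod_prod R Z1 K) Z2"
    using SP_assoc[OF Z1 Kc Z2] by simp
  also have "submod_prod R Z1 K = submod_prod R K Z1" using SP_comm[OF Z1 Kc] .
  also have "submod_prod R (submod_prod R K Z1) Z2 = submod_prod R K (submod_prod R Z1 Z2)"
    using SP_assoc[OF Kc Z1 Z2] .
  also have "submod_prod R K (submod_prod R K (submod_prod R Z1 Z2)) = submod_prod R (submod_prod R K K) (submod_prod R Z1 Z2)"
    using SP_assoc[OF Kc Kc c1(3)] by simp
  also have "submod_prod R K K = K" using SP_one[OF K K_submod[OF K]] .
  finally show ?thesis .
qed

lemma gen_submod_SP:
  assumes K: "subring K R" and Z: "Z \<subseteq> carrier R"
  shows "gen_submod R K Z = submod_prod R K Z"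
proof -
  have Kc: "K \<subseteq> carrier R" using subringE(1)[OF K] .
  have sm: "R_submod R K (submod_prod R K Z)"
    using SP_submod[OF K_submod[OF K] Z Kc] .
  have sub: "Z \<subseteq> submod_prod R K Z"
  proof
    fix z assume z: "z \<in> Z"
    then have "z = \<one> \<otimes> z" using Z by auto
    then show "z \<in> submod_prod R K Z" using SP_mem[OF Kc Z subringE(3)[OF K] z] by simp
  qed
  have least: "submod_prod R K Z \<subseteq> M" if "R_submod R K M" "Z \<subseteq> M" for M
    using that unfolding R_submod_def by (intro SP_least[OF Kc Z]) auto
  show ?thesis unfolding gen_submod_def
    using sm sub least by blast
qed

lemma PI_Inv_inv:
  assumes K: "subring K R" and u: "u \<in> Units R"
  shows "inv\<^bsub>Inv_group R K\<^esub> (PI K u) = PI K (inv u)"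
proof -
  interpret G: comm_group "Inv_group R K" by (rule Inv_group_comm[OF K])
  show ?thesis
    apply (rule G.inv_equality)
    using PI_mult[OF K, of "inv u" u] u PI_one[OF K] PI_in_Inv[OF K] by (auto simp: Inv_group_def)
qed

lemma Inv_inv_unique:
  assumes K: "subring K R" and M: "M \<in> carrier (Inv_group R K)" and N: "N \<in> carrier (Inv_group R K)"
    and e: "submod_prod R M N = K"
  shows "N = inv\<^bsub>Inv_group R K\<^esub> M"
proof -
  interpret G: comm_group "Inv_group R K" by (rule Inv_group_comm[OF K])
  have "N \<otimes>\<^bsub>Inv_group R K\<^esub> M = \<one>\<^bsub>Inv_group R K\<^esub>" using e G.m_comm[OF M N] by (simp add: Inv_group_def)
  then show ?thesis using G.inv_equality[OF _ M N] by simp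
qed

lemma Inv_carrier_submod: "M \<in> carrier (Inv_group R K) \<Longrightarrow> R_submod R K M"
  unfolding Inv_group_def invertible_ideal_def by simp

lemma Inv_carrier_c: "M \<in> carrier (Inv_group R K) \<Longrightarrow> M \<subseteq> carrier R"
  using Inv_carrier_submod submod_carrier by blast

end

locale setting =
  fixes B :: "('a,'m) ring_scheme" and A :: "'a set"
  assumes cringB: "cring B" and subA: "subring A B"
    and red: "reduced (B\<lparr>carrier := A\<rparr>)" and fin: "finite (minimal_primes (B\<lparr>carrier := A\<rparr>))"
    and nzdAB: "\<forall>s. nzd (B\<lparr>carrier := A\<rparr>) s \<longrightarrow> nzd B s"
begin

abbreviation "RA \<equiv> B\<lparr>carrier := A\<rparr>"
abbreviation "TA \<equiv> Tot RA"
abbreviation "TB \<equiv> Tot B"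
abbreviation "cA \<equiv> canon RA"
abbreviation "cB \<equiv> canon B"
abbreviation "tau \<equiv> tot_map B A"
abbreviation "iota \<equiv> (\<lambda>b. frac B b \<one>\<^bsub>B\<^esub>)"
abbreviation "Ap \<equiv> iota ` A"
abbreviation "TAp \<equiv> tau ` carrier TA"

lemma cringRA: "cring RA"
proof -
  interpret cring B by (rule cringB)
  have "subcring A B" using subcringI'[OF subA] .
  then show ?thesis using subcring_iff[OF subringE(1)[OF subA]] by simp
qed

sublocale b: cring B by (rule cringB)
sublocale ra: cring RA by (rule cringRA)
sublocale ta: cring TA by (rule ra.Tot_cring)
sublocale tb: cring TB by (rule b.Tot_cring)

lemma Ac: "A \<subseteq> carrier B" using subringE(1)[OF subA] .

lemma nzdA: "nzd RA s \<Longrightarrow> s \<in> A \<and> nzd B s"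
  using nzdAB ra.nzd_carrier by auto

lemma tau_frac:
  assumes a: "a \<in> A" and s: "nzd RA s"
  shows "tau (frac RA a s) = frac B a s"
proof -
  have sB: "nzd B s" "s \<in> A" using nzdA[OF s] by auto
  have "frac B a' s' = frac B a s" if "(a', s') \<in> frac RA a s" for a' s'
  proof -
    have h: "a' \<in> A" "nzd RA s'" "a \<otimes>\<^bsub>B\<^esub> s' = a' \<otimes>\<^bsub>B\<^esub> s" using that unfolding ra.frac_set by auto
    then show ?thesis using b.frac_eq[of a' s' a s] nzdA[OF h(2)] sB a Ac by (auto simp: b.m_comm)
  qed
  moreover have "(a, s) \<in> frac RA a s" using ra.frac_self a s by simp
  ultimately have "{frac B a' s' | a' s'. (a', s') \<in> frac RA a s} = {frac B a s}" by blast
  then show ?thesis unfolding tot_map_def by simp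
qed

lemma TA_cases:
  assumes "x \<in> carrier TA"
  obtains a s where "a \<in> A" "nzd RA s" "x = frac RA a s"
  using ra.Tot_cases[OF assms] by auto

lemma tau_closed: "x \<in> carrier TA \<Longrightarrow> tau x \<in> carrier TB"
  by (erule TA_cases) (use tau_frac nzdA Ac in \<open>auto intro!: b.frac_in_Tot\<close>)

lemma tau_hom: "tau \<in> ring_hom TA TB"
proof (rule ring_hom_memI)
  show "tau x \<in> carrier TB" if "x \<in> carrier TA" for x using tau_closed that .
  fix x y assume x: "x \<in> carrier TA" and y: "y \<in> carrier TA"
  obtain a s where a: "a \<in> A" "nzd RA s" "x = frac RA a s" using x by (rule TA_cases)
  obtain b t where b: "b \<in> A" "nzd RA t" "y = frac RA b t" using y by (rule TA_cases)
  have st: "nzd RA (s \<otimes>\<^bsub>B\<^esub> t)" using ra.nzd_mult[OF a(2) b(2)] by simp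
  have ab: "a \<otimes>\<^bsub>B\<^esub> b \<in> A" "a \<otimes>\<^bsub>B\<^esub> t \<oplus>\<^bsub>B\<^esub> b \<otimes>\<^bsub>B\<^esub> s \<in> A"
    using a b nzdA subringE(6,7)[OF subA] by auto
  have aB: "a \<in> carrier B" "b \<in> carrier B" using a b Ac by auto
  have sB: "nzd B s" "nzd B t" using nzdA a b by auto
  show "tau (x \<otimes>\<^bsub>TA\<^esub> y) = tau x \<otimes>\<^bsub>TB\<^esub> tau y"
    using ra.Tot_mult[of a s b t] a b st ab tau_frac b.Tot_mult[OF aB(1) sB(1) aB(2) sB(2)] by simp
  show "tau (x \<oplus>\<^bsub>TA\<^esub> y) = tau x \<oplus>\<^bsub>TB\<^esub> tau y"
    using ra.Tot_add[of a s b t] a b st ab tau_frac b.Tot_add[OF aB(1) sB(1) aB(2) sB(2)] by simp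
next
  have "\<one>\<^bsub>B\<^esub> \<in> A" using subringE(3)[OF subA] .
  then show "tau \<one>\<^bsub>TA\<^esub> = \<one>\<^bsub>TB\<^esub>"
    using tau_frac[of "\<one>\<^bsub>B\<^esub>" "\<one>\<^bsub>B\<^esub>"] ra.nzd_one ra.Tot_one b.Tot_one by simp
qed

lemma tau_inj: "inj_on tau (carrier TA)"
proof (rule inj_onI)
  fix x y assume x: "x \<in> carrier TA" and y: "y \<in> carrier TA" and e: "tau x = tau y"
  obtain a s where a: "a \<in> A" "nzd RA s" "x = frac RA a s" using x by (rule TA_cases)
  obtain b t where b: "b \<in> A" "nzd RA t" "y = frac RA b t" using y by (rule TA_cases)
  have "frac B a s = frac B b t" using e a b tau_frac by simp
  moreover have "a \<in> carrier B" "b \<in> carrier B" "nzd B s" "nzd B t" using a b nzdA Ac by auto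
  ultimately have "a \<otimes>\<^bsub>B\<^esub> t = b \<otimes>\<^bsub>B\<^esub> s" using b.frac_eq by simp
  then show "x = y" using ra.frac_eq[of a s b t] a b by simp
qed

sublocale tauh: ring_hom_cring TA TB tau
  by (intro ring_hom_cringI ta.is_cring tb.is_cring tau_hom)

sublocale iotah: ring_hom_cring B TB iota
  by (intro ring_hom_cringI b.is_cring tb.is_cring b.emb_hom)

lemma iota_inj: "inj_on iota (carrier B)"
  by (rule inj_onI) (use b.emb_inj in auto)

lemma tau_iota: "a \<in> A \<Longrightarrow> tau (frac RA a \<one>\<^bsub>B\<^esub>) = iota a"
  using tau_frac[of a "\<one>\<^bsub>B\<^esub>"] ra.nzd_one by simp

lemma cA_img: "cA = (\<lambda>a. frac RA a \<one>\<^bsub>B\<^esub>) ` A"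
  using ra.canon_img by simp

lemma tau_cA: "tau ` cA = Ap"
  unfolding cA_img image_image using tau_iota by (auto intro!: image_cong)

lemma cB_img: "cB = iota ` carrier B" using b.canon_img .

lemma cA_sub: "subring cA TA" using ra.canon_subring .
lemma cB_sub: "subring cB TB" using b.canon_subring .
lemma TAp_sub: "subring TAp TB" using tauh.ring.img_is_subring[OF ta.carrier_is_subring] .
lemma Ap_sub: "subring Ap TB" using iotah.ring.img_is_subring[OF subA] .
lemma Ap_TAp: "Ap \<subseteq> TAp"
proof -
  have "tau ` cA \<subseteq> TAp" using subringE(1)[OF cA_sub] by (rule image_mono)
  then show ?thesis using tau_cA by simp
qed
lemma Ap_cB: "Ap \<subseteq> cB" using cB_img Ac by auto
lemma cA_c: "cA \<subseteq> carrier TA" using subringE(1)[OF cA_sub] .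
lemma cB_c: "cB \<subseteq> carrier TB" using subringE(1)[OF cB_sub] .
lemma TAp_c: "TAp \<subseteq> carrier TB" using subringE(1)[OF TAp_sub] .
lemma Ap_c: "Ap \<subseteq> carrier TB" using subringE(1)[OF Ap_sub] .

lemma TAp_vn:
  assumes x: "x \<in> TAp" shows "\<exists>y\<in>TAp. x = x \<otimes>\<^bsub>TB\<^esub> x \<otimes>\<^bsub>TB\<^esub> y"
proof -
  obtain x0 where x0: "x0 \<in> carrier TA" "x = tau x0" using x by auto
  obtain a s where a: "a \<in> A" "nzd RA s" "x0 = frac RA a s" using x0(1) by (rule TA_cases)
  obtain t where t: "nzd RA t" "a \<otimes>\<^bsub>B\<^esub> t = a \<otimes>\<^bsub>B\<^esub> a"
    using ra.vn_lemma[OF red fin, of a] a by auto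
  have sA: "s \<in> A" "nzd B s" "t \<in> A" "nzd B t" using nzdA a t by auto
  have cB: "a \<in> carrier B" "s \<in> carrier B" "t \<in> carrier B" using a sA Ac by auto
  define y where "y = frac B s t"
  have yT: "y \<in> TAp" unfolding y_def using tau_frac[OF sA(1) t(1)] ra.frac_in_Tot[of s t] sA t
    by (auto intro!: image_eqI[of _ _ "frac RA s t"])
  have xx: "x = frac B a s" using x0 a tau_frac by simp
  have "x \<otimes>\<^bsub>TB\<^esub> x \<otimes>\<^bsub>TB\<^esub> y = frac B (a \<otimes>\<^bsub>B\<^esub> a \<otimes>\<^bsub>B\<^esub> s) (s \<otimes>\<^bsub>B\<^esub> s \<otimes>\<^bsub>B\<^esub> t)"
    unfolding xx y_def using cB sA by (simp add: b.Tot_mult b.nzd_mult)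
  also have "\<dots> = frac B a s"
  proof (subst b.frac_eq)
    show "a \<otimes>\<^bsub>B\<^esub> a \<otimes>\<^bsub>B\<^esub> s \<in> carrier B" using cB by simp
    show "nzd B (s \<otimes>\<^bsub>B\<^esub> s \<otimes>\<^bsub>B\<^esub> t)" using sA b.nzd_mult by simp
    have "a \<otimes>\<^bsub>B\<^esub> a \<otimes>\<^bsub>B\<^esub> s \<otimes>\<^bsub>B\<^esub> s = (a \<otimes>\<^bsub>B\<^esub> t) \<otimes>\<^bsub>B\<^esub> (s \<otimes>\<^bsub>B\<^esub> s)"
      using t(2) cB by (simp add: b.m_ac)
    also have "\<dots> = a \<otimes>\<^bsub>B\<^esub> (s \<otimes>\<^bsub>B\<^esub> s \<otimes>\<^bsub>B\<^esub> t)" using cB by (simp add: b.m_ac)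
    finally show "a \<otimes>\<^bsub>B\<^esub> a \<otimes>\<^bsub>B\<^esub> s \<otimes>\<^bsub>B\<^esub> s = a \<otimes>\<^bsub>B\<^esub> (s \<otimes>\<^bsub>B\<^esub> s \<otimes>\<^bsub>B\<^esub> t)" .
  qed (use cB sA in auto)
  finally have "x = x \<otimes>\<^bsub>TB\<^esub> x \<otimes>\<^bsub>TB\<^esub> y" using xx by simp
  then show ?thesis using yT by blast
qed

end

context setting
begin

abbreviation "IGA \<equiv> Inv_group TA cA"
abbreviation "IGB \<equiv> Inv_group TB cB"
abbreviation "HA \<equiv> principal_ideals TA cA"
abbreviation "HB \<equiv> principal_ideals TB cB"

definition E :: "('a \<times> 'a) set set \<Rightarrow> ('a \<times> 'a) set set" where
  "E L = submod_prod TB cB (tau ` L)"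

lemma tau_img_c: "L \<subseteq> carrier TA \<Longrightarrow> tau ` L \<subseteq> carrier TB"
  using tau_closed by auto

lemma ext_E: "L \<subseteq> carrier TA \<Longrightarrow> ext_ideal B A L = E L"
  unfolding ext_ideal_def E_def using tb.gen_submod_SP[OF cB_sub tau_img_c] by simp

lemma E_SP:
  assumes "L1 \<subseteq> carrier TA" "L2 \<subseteq> carrier TA"
  shows "E (submod_prod TA L1 L2) = submod_prod TB (E L1) (E L2)"
  unfolding E_def tauh.hSP[OF assms] tb.SP_KK[OF cB_sub tau_img_c[OF assms(1)] tau_img_c[OF assms(2)]] ..

lemma E_cA: "E cA = cB"
  unfolding E_def tau_cA using tb.SP_sub_subring[OF cB_sub Ap_sub Ap_cB] .

lemma E_sm: "L \<subseteq> carrier TA \<Longrightarrow> R_submod TB cB (E L)"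
  unfolding E_def using tb.SP_submod[OF tb.K_submod[OF cB_sub] tau_img_c cB_c] .

lemma E_carrier:
  assumes L: "L \<in> carrier IGA" shows "E L \<in> carrier IGB"
proof -
  obtain L' where L': "R_submod TA cA L'" "submod_prod TA L L' = cA" and Ls: "R_submod TA cA L"
    using L unfolding Inv_group_def invertible_ideal_def by auto
  have c: "L \<subseteq> carrier TA" "L' \<subseteq> carrier TA" using Ls L' ta.submod_carrier by auto
  have "submod_prod TB (E L) (E L') = cB" using E_SP[OF c] L'(2) E_cA by simp
  then show ?thesis unfolding Inv_group_def invertible_ideal_def using E_sm c by auto
qed

lemma E_PI:
  assumes x: "x \<in> Units TA" shows "E (ta.PI cA x) = tb.PI cB (tau x)"
proof -
  have xc: "x \<in> carrier TA" using x by auto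
  have "tau ` ta.PI cA x = tb.PI Ap (tau x)" using tauh.hPI[OF xc cA_c] tau_cA by simp
  then show ?thesis unfolding E_def using tb.SP_PI_sub[OF cB_sub Ap_sub Ap_cB tau_closed[OF xc]] by simp
qed

lemma IGA_comm: "comm_group IGA" using ta.Inv_group_comm[OF cA_sub] .
lemma IGB_comm: "comm_group IGB" using tb.Inv_group_comm[OF cB_sub] .
lemma HA_sub: "subgroup HA IGA" using ta.principal_subgroup[OF cA_sub] .
lemma HB_sub: "subgroup HB IGB" using tb.principal_subgroup[OF cB_sub] .
lemma HA_normal: "HA \<lhd> IGA" using comm_group.subgroup_imp_normal[OF IGA_comm HA_sub] .
lemma HB_normal: "HB \<lhd> IGB" using comm_group.subgroup_imp_normal[OF IGB_comm HB_sub] .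

lemma ClB_eq: "Cl B = IGB Mod HB" unfolding Cl_def Cart_group_def ..
lemma ClA_eq: "Cl RA = IGA Mod HA" unfolding Cl_def Cart_group_def ..

lemma ClB_group: "group (Cl B)" unfolding ClB_eq using normal.factorgroup_is_group[OF HB_normal] .
lemma ClA_group: "group (Cl RA)" unfolding ClA_eq using normal.factorgroup_is_group[OF HA_normal] .

definition psi where "psi L = HB #>\<^bsub>IGB\<^esub> E L"

lemma psi_carrier: "L \<in> carrier IGA \<Longrightarrow> psi L \<in> carrier (Cl B)"
  unfolding psi_def ClB_eq FactGroup_def
  using group.rcosetsI[OF comm_group.axioms(2)[OF IGB_comm] subgroup.subset[OF HB_sub] E_carrier] by simp

lemma psi_mult:
  assumes L1: "L1 \<in> carrier IGA" and L2: "L2 \<in> carrier IGA"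
  shows "psi (L1 \<otimes>\<^bsub>IGA\<^esub> L2) = psi L1 \<otimes>\<^bsub>Cl B\<^esub> psi L2"
proof -
  have c: "L1 \<subseteq> carrier TA" "L2 \<subseteq> carrier TA" using L1 L2 ta.Inv_carrier_c by auto
  have "E (L1 \<otimes>\<^bsub>IGA\<^esub> L2) = E L1 \<otimes>\<^bsub>IGB\<^esub> E L2" using E_SP[OF c] by (simp add: Inv_group_def)
  then show ?thesis unfolding psi_def ClB_eq
    using normal.rcos_sum[OF HB_normal E_carrier[OF L1] E_carrier[OF L2]] by (simp add: FactGroup_def)
qed

lemma psi_hom: "psi \<in> hom IGA (Cl B)"
  unfolding hom_def using psi_carrier psi_mult by auto

lemma HB_PI: "u \<in> Units TB \<Longrightarrow> tb.PI cB u \<in> HB"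
  using tb.principal_PI by auto

lemma HA_PI: "u \<in> Units TA \<Longrightarrow> ta.PI cA u \<in> HA"
  using ta.principal_PI by auto

lemma psi_PI: assumes x: "x \<in> Units TA" shows "psi (ta.PI cA x) = HB"
proof -
  have "tau x \<in> Units TB" using tauh.hUnits(1)[OF x] .
  then have "tb.PI cB (tau x) \<in> HB" by (rule HB_PI)
  moreover have "tb.PI cB (tau x) \<in> carrier IGB" using subgroup.subset[OF HB_sub] calculation by auto
  ultimately show ?thesis unfolding psi_def E_PI[OF x]
    using group.coset_join2[OF comm_group.axioms(2)[OF IGB_comm] _ HB_sub] by simp
qed

lemma psi_const:
  assumes L: "L \<in> carrier IGA" and L': "L' \<in> HA #>\<^bsub>IGA\<^esub> L"
  shows "psi L' = psi L"
proof -
  obtain h where h: "h \<in> HA" "L' = h \<otimes>\<^bsub>IGA\<^esub> L" using L' unfolding r_coset_def by auto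
  obtain x where x: "x \<in> Units TA" "h = ta.PI cA x" using h(1) ta.principal_PI by auto
  have hc: "h \<in> carrier IGA" using h(1) subgroup.subset[OF HA_sub] by auto
  have "psi L' = psi h \<otimes>\<^bsub>Cl B\<^esub> psi L" using psi_mult[OF hc L] h by simp
  also have "psi h = \<one>\<^bsub>Cl B\<^esub>" using psi_PI[OF x(1)] x(2) by (simp add: ClB_eq FactGroup_def)
  finally show ?thesis using monoid.l_one[OF group.is_monoid[OF ClB_group] psi_carrier[OF L]] by simp
qed

lemma Cl_map_eq:
  assumes L: "L \<in> carrier IGA" shows "Cl_map B A (HA #>\<^bsub>IGA\<^esub> L) = psi L"
proof -
  have ne: "L \<in> HA #>\<^bsub>IGA\<^esub> L" using group.rcos_self[OF comm_group.axioms(2)[OF IGA_comm] L HA_sub] .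
  define L' where "L' = (SOME L'. L' \<in> HA #>\<^bsub>IGA\<^esub> L)"
  have L'in: "L' \<in> HA #>\<^bsub>IGA\<^esub> L" unfolding L'_def using ne by (rule someI)
  have L'c: "L' \<in> carrier IGA"
    using L'in subgroup.elemrcos_carrier[OF HA_sub comm_group.axioms(2)[OF IGA_comm] L] by simp
  have "Cl_map B A (HA #>\<^bsub>IGA\<^esub> L) = psi L'"
    unfolding Cl_map_def psi_def L'_def[symmetric] using ext_E[OF ta.Inv_carrier_c[OF L'c]] by simp
  also have "\<dots> = psi L" using psi_const[OF L L'in] .
  finally show ?thesis .
qed

lemma Cl_map_hom: "Cl_map B A \<in> hom (Cl RA) (Cl B)"
proof -
  have car: "K \<in> carrier (Cl RA) \<Longrightarrow> \<exists>L\<in>carrier IGA. K = HA #>\<^bsub>IGA\<^esub> L" for K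
    unfolding ClA_eq FactGroup_def RCOSETS_def by auto
  show ?thesis unfolding hom_def
  proof (intro CollectI conjI ballI)
    show "Cl_map B A \<in> carrier (Cl RA) \<rightarrow> carrier (Cl B)"
    proof
      fix K assume "K \<in> carrier (Cl RA)"
      then obtain L where "L \<in> carrier IGA" "K = HA #>\<^bsub>IGA\<^esub> L" using car by blast
      then show "Cl_map B A K \<in> carrier (Cl B)" using Cl_map_eq psi_carrier by simp
    qed
    fix K1 K2 assume K1: "K1 \<in> carrier (Cl RA)" and K2: "K2 \<in> carrier (Cl RA)"
    obtain L1 where L1: "L1 \<in> carrier IGA" "K1 = HA #>\<^bsub>IGA\<^esub> L1" using car[OF K1] by blast
    obtain L2 where L2: "L2 \<in> carrier IGA" "K2 = HA #>\<^bsub>IGA\<^esub> L2" using car[OF K2] by blast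
    have "K1 \<otimes>\<^bsub>Cl RA\<^esub> K2 = HA #>\<^bsub>IGA\<^esub> (L1 \<otimes>\<^bsub>IGA\<^esub> L2)"
      using normal.rcos_sum[OF HA_normal L1(1) L2(1)] L1 L2 by (simp add: ClA_eq FactGroup_def)
    moreover have m: "L1 \<otimes>\<^bsub>IGA\<^esub> L2 \<in> carrier IGA"
      using monoid.m_closed[OF group.is_monoid[OF comm_group.axioms(2)[OF IGA_comm]] L1(1) L2(1)] .
    ultimately have "Cl_map B A (K1 \<otimes>\<^bsub>Cl RA\<^esub> K2) = psi (L1 \<otimes>\<^bsub>IGA\<^esub> L2)"
      using Cl_map_eq[OF m] by simp
    also have "\<dots> = psi L1 \<otimes>\<^bsub>Cl B\<^esub> psi L2" using psi_mult[OF L1(1) L2(1)] .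
    also have "\<dots> = Cl_map B A K1 \<otimes>\<^bsub>Cl B\<^esub> Cl_map B A K2"
      using Cl_map_eq[OF L1(1)] Cl_map_eq[OF L2(1)] L1(2) L2(2) by simp
    finally show "Cl_map B A (K1 \<otimes>\<^bsub>Cl RA\<^esub> K2) = Cl_map B A K1 \<otimes>\<^bsub>Cl B\<^esub> Cl_map B A K2" .
  qed
qed

end

lemma (in cring) inv_mult_units:
  assumes "u \<in> Units R" "v \<in> Units R"
  shows "inv (u \<otimes> v) = inv u \<otimes> inv v"
proof -
  have c: "u \<in> carrier R" "v \<in> carrier R" "inv u \<in> carrier R" "inv v \<in> carrier R" using assms by auto
  have "(u \<otimes> v) \<otimes> (inv u \<otimes> inv v) = (u \<otimes> inv u) \<otimes> (v \<otimes> inv v)" using c by (simp add: m_ac)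
  also have "\<dots> = \<one>" using assms by simp
  finally show ?thesis using comm_inv_char[of "u \<otimes> v" "inv u \<otimes> inv v"] c by simp
qed

lemma (in cring) scl_mono: "Z1 \<subseteq> Z2 \<Longrightarrow> scl R u Z1 \<subseteq> scl R u Z2"
  unfolding scl_def by auto

context setting
begin

abbreviation "IGBA \<equiv> Inv_group B A"
abbreviation "HBA \<equiv> principal_ideals B A"
abbreviation "IGT \<equiv> Inv_group TB TAp"

definition ext' :: "'a set \<Rightarrow> ('a \<times> 'a) set set" where
  "ext' I = submod_prod TB TAp (iota ` I)"

definition U :: "'a set \<Rightarrow> ('a \<times> 'a) set set" where
  "U I = {u \<in> Units TB. ext' I = tb.PI TAp u}"

definition Lof :: "('a \<times> 'a) set \<Rightarrow> 'a set \<Rightarrow> ('a \<times> 'a) set set" where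
  "Lof u I = {x \<in> carrier TA. tau x \<in> scl TB (inv\<^bsub>TB\<^esub> u) (iota ` I)}"

definition phi :: "'a set \<Rightarrow> ('a \<times> 'a) set set set" where
  "phi I = HA #>\<^bsub>IGA\<^esub> Lof (SOME u. u \<in> U I) I"

lemma iota_c: "I \<subseteq> carrier B \<Longrightarrow> iota ` I \<subseteq> carrier TB" by auto

lemma TAp1: "\<one>\<^bsub>TB\<^esub> \<in> TAp" using subringE(3)[OF TAp_sub] .

lemma ext'_sm: "I \<subseteq> carrier B \<Longrightarrow> R_submod TB TAp (ext' I)"
  unfolding ext'_def using tb.SP_submod[OF tb.K_submod[OF TAp_sub] iota_c TAp_c] .

lemma ext'_mult:
  assumes "I \<subseteq> carrier B" "J \<subseteq> carrier B"
  shows "submod_prod TB (ext' I) (ext' J) = ext' (submod_prod B I J)"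
  unfolding ext'_def iotah.hSP[OF assms] using tb.SP_KK[OF TAp_sub iota_c[OF assms(1)] iota_c[OF assms(2)]] .

lemma ext'_A: "ext' A = TAp"
  unfolding ext'_def using tb.SP_sub_subring[OF TAp_sub Ap_sub Ap_TAp] .

lemma IGBA_comm: "comm_group IGBA" using b.Inv_group_comm[OF subA] .
lemma IGT_comm: "comm_group IGT" using tb.Inv_group_comm[OF TAp_sub] .

lemma IGBA_inv:
  assumes "I \<in> carrier IGBA"
  obtains J where "J \<in> carrier IGBA" "submod_prod B I J = A"
proof -
  obtain J where J: "R_submod B A J" "submod_prod B I J = A" and Is: "R_submod B A I"
    using assms unfolding Inv_group_def invertible_ideal_def by auto
  have "submod_prod B J I = A" using b.SP_comm[of I J] J Is b.submod_carrier by auto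
  then have "J \<in> carrier IGBA" using J Is unfolding Inv_group_def invertible_ideal_def by auto
  then show ?thesis using that J by blast
qed

lemma ext'_carrier:
  assumes I: "I \<in> carrier IGBA" and J: "J \<in> carrier IGBA" and IJ: "submod_prod B I J = A"
  shows "ext' I \<in> carrier IGT" "submod_prod TB (ext' I) (ext' J) = TAp"
proof -
  have c: "I \<subseteq> carrier B" "J \<subseteq> carrier B" using I J b.Inv_carrier_c by auto
  show e: "submod_prod TB (ext' I) (ext' J) = TAp" using ext'_mult[OF c] IJ ext'_A by simp
  then show "ext' I \<in> carrier IGT" unfolding Inv_group_def invertible_ideal_def
    using ext'_sm c by auto
qed

lemma U_ne:
  assumes I: "I \<in> carrier IGBA" shows "\<exists>u. u \<in> U I"
proof -
  obtain J where J: "J \<in> carrier IGBA" "submod_prod B I J = A" using IGBA_inv[OF I] by blast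
  have c: "I \<subseteq> carrier B" "J \<subseteq> carrier B" using I J b.Inv_carrier_c by auto
  obtain u where "u \<in> Units TB" "ext' I = tb.PI TAp u"
    using tb.core_lemma[OF TAp_sub TAp_vn ext'_sm[OF c(1)] ext'_sm[OF c(2)] ext'_carrier(2)[OF I J]] by blast
  then show ?thesis unfolding U_def by blast
qed

lemma iota_sub_ext': "I \<subseteq> carrier B \<Longrightarrow> iota ` I \<subseteq> ext' I"
proof
  fix x assume I: "I \<subseteq> carrier B" and x: "x \<in> iota ` I"
  then have xc: "x \<in> carrier TB" by auto
  then have "x = \<one>\<^bsub>TB\<^esub> \<otimes>\<^bsub>TB\<^esub> x" by simp
  then show "x \<in> ext' I" unfolding ext'_def using tb.SP_mem[OF TAp_c iota_c[OF I] TAp1 x] by simp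
qed

lemma U_inv_sub:
  assumes I: "I \<subseteq> carrier B" and u: "u \<in> U I"
  shows "scl TB (inv\<^bsub>TB\<^esub> u) (iota ` I) \<subseteq> TAp"
proof -
  have uu: "u \<in> Units TB" "ext' I = tb.PI TAp u" using u unfolding U_def by auto
  have uc: "u \<in> carrier TB" using uu by auto
  have "iota ` I \<subseteq> scl TB u TAp" using iota_sub_ext'[OF I] uu tb.PI_sc[OF TAp_c uc] by simp
  then have "scl TB (inv\<^bsub>TB\<^esub> u) (iota ` I) \<subseteq> scl TB (inv\<^bsub>TB\<^esub> u) (scl TB u TAp)" by (rule tb.scl_mono)
  then show ?thesis using tb.sc_inv[OF uu(1) TAp_c] by simp
qed

lemma tau_cA_iota: "tau ` cA = iota ` A" using tau_cA .

lemma scl_sm_Ap: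
  assumes I: "R_submod B A I" and v: "v \<in> carrier TB"
  shows "R_submod TB (tau ` cA) (scl TB v (iota ` I))"
proof -
  have "R_submod TB (iota ` A) (iota ` I)" using iotah.hsubmod[OF I Ac] .
  then show ?thesis using tb.sc_submod[OF _ v Ap_c] tau_cA by simp
qed

lemma Lof_props:
  assumes I: "I \<in> carrier IGBA" and u: "u \<in> U I"
  shows "Lof u I \<in> carrier IGA" "tau ` Lof u I = scl TB (inv\<^bsub>TB\<^esub> u) (iota ` I)"
proof -
  obtain J where J: "J \<in> carrier IGBA" "submod_prod B I J = A" using IGBA_inv[OF I] by blast
  have c: "I \<subseteq> carrier B" "J \<subseteq> carrier B" using I J b.Inv_carrier_c by auto
  have sm: "R_submod B A I" "R_submod B A J" using I J b.Inv_carrier_submod by auto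
  have uu: "u \<in> Units TB" "ext' I = tb.PI TAp u" using u unfolding U_def by auto
  have uc: "u \<in> carrier TB" "inv\<^bsub>TB\<^esub> u \<in> carrier TB" using uu by auto
  have eJ: "ext' J = tb.PI TAp (inv\<^bsub>TB\<^esub> u)"
  proof -
    have "ext' J = inv\<^bsub>IGT\<^esub> (ext' I)"
      using tb.Inv_inv_unique[OF TAp_sub ext'_carrier(1)[OF I J(1,2)] ext'_carrier(1)[OF J(1) I]] ext'_carrier(2)[OF I J]
      using b.SP_comm[OF c] J(2) by simp
    then show ?thesis using uu tb.PI_Inv_inv[OF TAp_sub uu(1)] by simp
  qed
  have Jsub: "scl TB u (iota ` J) \<subseteq> TAp"
  proof -
    have "iota ` J \<subseteq> scl TB (inv\<^bsub>TB\<^esub> u) TAp" using iota_sub_ext'[OF c(2)] eJ tb.PI_sc[OF TAp_c uc(2)] by auto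
    then have "scl TB u (iota ` J) \<subseteq> scl TB u (scl TB (inv\<^bsub>TB\<^esub> u) TAp)" by (rule tb.scl_mono)
    then show ?thesis using tb.sc_inv2[OF uu(1) TAp_c] by simp
  qed
  define L' where "L' = {x \<in> carrier TA. tau x \<in> scl TB u (iota ` J)}"
  have pre1: "R_submod TA cA (Lof u I)" "tau ` Lof u I = scl TB (inv\<^bsub>TB\<^esub> u) (iota ` I)"
    unfolding Lof_def using tauh.hpre[OF tau_inj cA_c scl_sm_Ap[OF sm(1) uc(2)] U_inv_sub[OF c(1) u]] by auto
  have pre2: "R_submod TA cA L'" "tau ` L' = scl TB u (iota ` J)"
    unfolding L'_def using tauh.hpre[OF tau_inj cA_c scl_sm_Ap[OF sm(2) uc(1)] Jsub] by auto
  show "tau ` Lof u I = scl TB (inv\<^bsub>TB\<^esub> u) (iota ` I)" by (rule pre1(2))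
  have Lc: "Lof u I \<subseteq> carrier TA" "L' \<subseteq> carrier TA" unfolding Lof_def L'_def by auto
  have ic: "iota ` I \<subseteq> carrier TB" "iota ` J \<subseteq> carrier TB" using iota_c c by auto
  have "tau ` submod_prod TA (Lof u I) L' = submod_prod TB (scl TB (inv\<^bsub>TB\<^esub> u) (iota ` I)) (scl TB u (iota ` J))"
    using tauh.hSP[OF Lc] pre1 pre2 by simp
  also have "\<dots> = scl TB (inv\<^bsub>TB\<^esub> u) (submod_prod TB (iota ` I) (scl TB u (iota ` J)))"
    using tb.sc_SP[OF uc(2) ic(1) tb.sc_carrier[OF uc(1) ic(2)]] .
  also have "submod_prod TB (iota ` I) (scl TB u (iota ` J)) = submod_prod TB (scl TB u (iota ` J)) (iota ` I)"
    using tb.SP_comm[OF ic(1) tb.sc_carrier[OF uc(1) ic(2)]] .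
  also have "\<dots> = scl TB u (submod_prod TB (iota ` J) (iota ` I))" using tb.sc_SP[OF uc(1) ic(2) ic(1)] .
  also have "scl TB (inv\<^bsub>TB\<^esub> u) \<dots> = submod_prod TB (iota ` J) (iota ` I)"
    using tb.sc_inv[OF uu(1) tb.SP_carrier[OF ic(2) ic(1)]] .
  also have "\<dots> = iota ` submod_prod B J I" using iotah.hSP[OF c(2) c(1)] by simp
  also have "submod_prod B J I = A" using b.SP_comm[OF c] J(2) by simp
  finally have "tau ` submod_prod TA (Lof u I) L' = tau ` cA" using tau_cA by simp
  then have "submod_prod TA (Lof u I) L' = cA"
    using inj_on_image_eq_iff[OF tau_inj ta.SP_carrier[OF Lc] cA_c] by simp
  then show "Lof u I \<in> carrier IGA" unfolding Inv_group_def invertible_ideal_def using pre1 pre2 by auto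
qed

lemma IGBA_mult: "I1 \<otimes>\<^bsub>IGBA\<^esub> I2 = submod_prod B I1 I2" by (simp add: Inv_group_def)
lemma IGA_mult: "L1 \<otimes>\<^bsub>IGA\<^esub> L2 = submod_prod TA L1 L2" by (simp add: Inv_group_def)

lemma IGBA_m_closed: "I1 \<in> carrier IGBA \<Longrightarrow> I2 \<in> carrier IGBA \<Longrightarrow> I1 \<otimes>\<^bsub>IGBA\<^esub> I2 \<in> carrier IGBA"
  using monoid.m_closed[OF group.is_monoid[OF comm_group.axioms(2)[OF IGBA_comm]]] by blast
lemma IGA_m_closed: "L1 \<in> carrier IGA \<Longrightarrow> L2 \<in> carrier IGA \<Longrightarrow> L1 \<otimes>\<^bsub>IGA\<^esub> L2 \<in> carrier IGA"
  using monoid.m_closed[OF group.is_monoid[OF comm_group.axioms(2)[OF IGA_comm]]] by blast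

lemma Lof_c: "Lof u I \<subseteq> carrier TA" unfolding Lof_def by auto

lemma U_mult:
  assumes I1: "I1 \<in> carrier IGBA" and I2: "I2 \<in> carrier IGBA" and u1: "u1 \<in> U I1" and u2: "u2 \<in> U I2"
  shows "u1 \<otimes>\<^bsub>TB\<^esub> u2 \<in> U (I1 \<otimes>\<^bsub>IGBA\<^esub> I2)"
    "Lof (u1 \<otimes>\<^bsub>TB\<^esub> u2) (I1 \<otimes>\<^bsub>IGBA\<^esub> I2) = Lof u1 I1 \<otimes>\<^bsub>IGA\<^esub> Lof u2 I2"
proof -
  have c: "I1 \<subseteq> carrier B" "I2 \<subseteq> carrier B" using I1 I2 b.Inv_carrier_c by auto
  have ic: "iota ` I1 \<subseteq> carrier TB" "iota ` I2 \<subseteq> carrier TB" using iota_c c by auto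
  have uu: "u1 \<in> Units TB" "ext' I1 = tb.PI TAp u1" "u2 \<in> Units TB" "ext' I2 = tb.PI TAp u2"
    using u1 u2 unfolding U_def by auto
  have uc: "u1 \<in> carrier TB" "u2 \<in> carrier TB" "inv\<^bsub>TB\<^esub> u1 \<in> carrier TB" "inv\<^bsub>TB\<^esub> u2 \<in> carrier TB"
    using uu by auto
  have "ext' (I1 \<otimes>\<^bsub>IGBA\<^esub> I2) = submod_prod TB (ext' I1) (ext' I2)" using ext'_mult[OF c] IGBA_mult by simp
  also have "\<dots> = tb.PI TAp (u1 \<otimes>\<^bsub>TB\<^esub> u2)" using uu tb.PI_mult[OF TAp_sub uc(1,2)] by simp
  finally show "u1 \<otimes>\<^bsub>TB\<^esub> u2 \<in> U (I1 \<otimes>\<^bsub>IGBA\<^esub> I2)" unfolding U_def using uu by auto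
  have m: "I1 \<otimes>\<^bsub>IGBA\<^esub> I2 \<in> carrier IGBA" using IGBA_m_closed[OF I1 I2] .
  have Lc: "Lof u1 I1 \<subseteq> carrier TA" "Lof u2 I2 \<subseteq> carrier TA" using Lof_c by auto
  have "tau ` (Lof u1 I1 \<otimes>\<^bsub>IGA\<^esub> Lof u2 I2) = submod_prod TB (scl TB (inv\<^bsub>TB\<^esub> u1) (iota ` I1)) (scl TB (inv\<^bsub>TB\<^esub> u2) (iota ` I2))"
    using tauh.hSP[OF Lc] Lof_props(2)[OF I1 u1] Lof_props(2)[OF I2 u2] IGA_mult by simp
  also have "\<dots> = scl TB (inv\<^bsub>TB\<^esub> u1) (submod_prod TB (iota ` I1) (scl TB (inv\<^bsub>TB\<^esub> u2) (iota ` I2)))"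
    using tb.sc_SP[OF uc(3) ic(1) tb.sc_carrier[OF uc(4) ic(2)]] .
  also have "submod_prod TB (iota ` I1) (scl TB (inv\<^bsub>TB\<^esub> u2) (iota ` I2)) = submod_prod TB (scl TB (inv\<^bsub>TB\<^esub> u2) (iota ` I2)) (iota ` I1)"
    using tb.SP_comm[OF ic(1) tb.sc_carrier[OF uc(4) ic(2)]] .
  also have "\<dots> = scl TB (inv\<^bsub>TB\<^esub> u2) (submod_prod TB (iota ` I2) (iota ` I1))" using tb.sc_SP[OF uc(4) ic(2) ic(1)] .
  also have "submod_prod TB (iota ` I2) (iota ` I1) = iota ` (I1 \<otimes>\<^bsub>IGBA\<^esub> I2)"
    using iotah.hSP[OF c(1,2)] tb.SP_comm[OF ic] IGBA_mult by simp
  also have "scl TB (inv\<^bsub>TB\<^esub> u1) (scl TB (inv\<^bsub>TB\<^esub> u2) (iota ` (I1 \<otimes>\<^bsub>IGBA\<^esub> I2))) = scl TB (inv\<^bsub>TB\<^esub> (u1 \<otimes>\<^bsub>TB\<^esub> u2)) (iota ` (I1 \<otimes>\<^bsub>IGBA\<^esub> I2))"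
    using tb.sc_sc[OF uc(3,4) iota_c[OF b.Inv_carrier_c[OF m]]] tb.inv_mult_units[OF uu(1,3)] by simp
  also have "\<dots> = tau ` Lof (u1 \<otimes>\<^bsub>TB\<^esub> u2) (I1 \<otimes>\<^bsub>IGBA\<^esub> I2)"
    using Lof_props(2)[OF m \<open>u1 \<otimes>\<^bsub>TB\<^esub> u2 \<in> U (I1 \<otimes>\<^bsub>IGBA\<^esub> I2)\<close>] by simp
  finally have X: "tau ` (Lof u1 I1 \<otimes>\<^bsub>IGA\<^esub> Lof u2 I2) = tau ` Lof (u1 \<otimes>\<^bsub>TB\<^esub> u2) (I1 \<otimes>\<^bsub>IGBA\<^esub> I2)" .
  have c2: "Lof u1 I1 \<otimes>\<^bsub>IGA\<^esub> Lof u2 I2 \<subseteq> carrier TA"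
    using ta.Inv_carrier_c[OF IGA_m_closed[OF Lof_props(1)[OF I1 u1] Lof_props(1)[OF I2 u2]]] .
  show "Lof (u1 \<otimes>\<^bsub>TB\<^esub> u2) (I1 \<otimes>\<^bsub>IGBA\<^esub> I2) = Lof u1 I1 \<otimes>\<^bsub>IGA\<^esub> Lof u2 I2"
    using inj_on_image_eq_iff[OF tau_inj Lof_c c2] X[symmetric] by blast
qed

lemma U_indep:
  assumes I: "I \<in> carrier IGBA" and u: "u \<in> U I" and u': "u' \<in> U I"
  shows "HA #>\<^bsub>IGA\<^esub> Lof u' I = HA #>\<^bsub>IGA\<^esub> Lof u I"
proof -
  have c: "I \<subseteq> carrier B" using I b.Inv_carrier_c by auto
  have ic: "iota ` I \<subseteq> carrier TB" using iota_c c by auto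
  have uu: "u \<in> Units TB" "u' \<in> Units TB" "tb.PI TAp u = tb.PI TAp u'" using u u' unfolding U_def by auto
  have uc: "u \<in> carrier TB" "u' \<in> carrier TB" "inv\<^bsub>TB\<^esub> u \<in> carrier TB" "inv\<^bsub>TB\<^esub> u' \<in> carrier TB" using uu by auto
  have "u' \<in> tb.PI TAp u'" using TAp1 uc unfolding tb.PI_def by (auto intro!: exI[of _ "\<one>\<^bsub>TB\<^esub>"])
  then have "u' \<in> tb.PI TAp u" using uu(3) by simp
  then obtain w where w: "w \<in> TAp" "u' = w \<otimes>\<^bsub>TB\<^esub> u" unfolding tb.PI_def by blast
  have "u \<in> tb.PI TAp u" using TAp1 uc unfolding tb.PI_def by (auto intro!: exI[of _ "\<one>\<^bsub>TB\<^esub>"])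
  then have "u \<in> tb.PI TAp u'" using uu(3) by simp
  then obtain w' where w': "w' \<in> TAp" "u = w' \<otimes>\<^bsub>TB\<^esub> u'" unfolding tb.PI_def by blast
  have wc: "w \<in> carrier TB" "w' \<in> carrier TB" using w w' TAp_c by auto
  have e: "u = (w' \<otimes>\<^bsub>TB\<^esub> w) \<otimes>\<^bsub>TB\<^esub> u" using w(2) w'(2) wc uc by (simp add: tb.m_assoc)
  have ww'c: "w' \<otimes>\<^bsub>TB\<^esub> w \<in> carrier TB" using wc by simp
  have "w' \<otimes>\<^bsub>TB\<^esub> w = (w' \<otimes>\<^bsub>TB\<^esub> w) \<otimes>\<^bsub>TB\<^esub> (u \<otimes>\<^bsub>TB\<^esub> inv\<^bsub>TB\<^esub> u)"
    using uu(1) ww'c by simp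
  also have "\<dots> = ((w' \<otimes>\<^bsub>TB\<^esub> w) \<otimes>\<^bsub>TB\<^esub> u) \<otimes>\<^bsub>TB\<^esub> inv\<^bsub>TB\<^esub> u"
    using ww'c uc by (simp add: tb.m_assoc)
  also have "\<dots> = u \<otimes>\<^bsub>TB\<^esub> inv\<^bsub>TB\<^esub> u" using e by simp
  also have "\<dots> = \<one>\<^bsub>TB\<^esub>" using uu(1) by simp
  finally have ww: "w' \<otimes>\<^bsub>TB\<^esub> w = \<one>\<^bsub>TB\<^esub>" .
  obtain w0 where w0: "w0 \<in> carrier TA" "w = tau w0" using w(1) by auto
  obtain w0' where w0': "w0' \<in> carrier TA" "w' = tau w0'" using w'(1) by auto
  have "tau (w0' \<otimes>\<^bsub>TA\<^esub> w0) = tau \<one>\<^bsub>TA\<^esub>" using ww w0 w0' by simp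
  then have w1: "w0' \<otimes>\<^bsub>TA\<^esub> w0 = \<one>\<^bsub>TA\<^esub>"
    using inj_onD[OF tau_inj _ ta.m_closed[OF w0'(1) w0(1)] ta.one_closed] by blast
  then have w2: "w0 \<otimes>\<^bsub>TA\<^esub> w0' = \<one>\<^bsub>TA\<^esub>" using ta.m_comm[OF w0(1) w0'(1)] by simp
  have w0U: "w0 \<in> Units TA" unfolding Units_def using w0(1) w0'(1) w1 w2 by blast
  have wU: "w \<in> Units TB" using tauh.hUnits(1)[OF w0U] w0 by simp
  have tinv: "tau (inv\<^bsub>TA\<^esub> w0) = inv\<^bsub>TB\<^esub> w" using tauh.hUnits(2)[OF w0U] w0 by simp
  have iu': "inv\<^bsub>TB\<^esub> u' = inv\<^bsub>TB\<^esub> w \<otimes>\<^bsub>TB\<^esub> inv\<^bsub>TB\<^esub> u" using w(2) tb.inv_mult_units[OF wU uu(1)] by simp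
  have iwc: "inv\<^bsub>TB\<^esub> w \<in> carrier TB" using wU by auto
  define h where "h = ta.PI cA (inv\<^bsub>TA\<^esub> w0)"
  have hH: "h \<in> HA" unfolding h_def using HA_PI w0U by auto
  have hc: "h \<in> carrier IGA" using hH subgroup.subset[OF HA_sub] by auto
  have Lu: "Lof u I \<in> carrier IGA" using Lof_props(1)[OF I u] .
  have smL: "R_submod TB Ap (scl TB (inv\<^bsub>TB\<^esub> u) (iota ` I))"
    using scl_sm_Ap[OF b.Inv_carrier_submod[OF I] uc(3)] tau_cA by simp
  have "tau ` (h \<otimes>\<^bsub>IGA\<^esub> Lof u I) = submod_prod TB (tau ` h) (scl TB (inv\<^bsub>TB\<^esub> u) (iota ` I))"
    using tauh.hSP[OF ta.Inv_carrier_c[OF hc] Lof_c] Lof_props(2)[OF I u] IGA_mult by simp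
  also have "tau ` h = scl TB (inv\<^bsub>TB\<^esub> w) Ap"
    unfolding h_def using tauh.hPI[OF _ cA_c, of "inv\<^bsub>TA\<^esub> w0"] w0U tau_cA tinv tb.PI_sc[OF Ap_c iwc] by simp
  also have "submod_prod TB (scl TB (inv\<^bsub>TB\<^esub> w) Ap) (scl TB (inv\<^bsub>TB\<^esub> u) (iota ` I))
      = scl TB (inv\<^bsub>TB\<^esub> w) (submod_prod TB Ap (scl TB (inv\<^bsub>TB\<^esub> u) (iota ` I)))"
    using tb.sc_SP[OF iwc Ap_c tb.sc_carrier[OF uc(3) ic]] .
  also have "submod_prod TB Ap (scl TB (inv\<^bsub>TB\<^esub> u) (iota ` I)) = scl TB (inv\<^bsub>TB\<^esub> u) (iota ` I)"
    using tb.SP_one[OF Ap_sub smL] .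
  also have "scl TB (inv\<^bsub>TB\<^esub> w) (scl TB (inv\<^bsub>TB\<^esub> u) (iota ` I)) = scl TB (inv\<^bsub>TB\<^esub> u') (iota ` I)"
    using tb.sc_sc[OF iwc uc(3) ic] iu' by simp
  also have "\<dots> = tau ` Lof u' I" using Lof_props(2)[OF I u'] by simp
  finally have "Lof u' I = h \<otimes>\<^bsub>IGA\<^esub> Lof u I"
    using inj_on_image_eq_iff[OF tau_inj ta.Inv_carrier_c[OF IGA_m_closed[OF hc Lu]] Lof_c] by simp
  then have "Lof u' I \<in> HA #>\<^bsub>IGA\<^esub> Lof u I" unfolding r_coset_def using hH by auto
  then show ?thesis
    using group.repr_independence[OF comm_group.axioms(2)[OF IGA_comm] _ Lu HA_sub] by simp
qed

lemma phi_eq: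
  assumes I: "I \<in> carrier IGBA" and u: "u \<in> U I"
  shows "phi I = HA #>\<^bsub>IGA\<^esub> Lof u I"
proof -
  have "(SOME u. u \<in> U I) \<in> U I" using u by (rule someI)
  then show ?thesis unfolding phi_def using U_indep[OF I u] by simp
qed

lemma phi_carrier:
  assumes I: "I \<in> carrier IGBA" shows "phi I \<in> carrier (Cl RA)"
proof -
  obtain u where u: "u \<in> U I" using U_ne[OF I] by blast
  show ?thesis unfolding phi_eq[OF I u] ClA_eq FactGroup_def
    using group.rcosetsI[OF comm_group.axioms(2)[OF IGA_comm] subgroup.subset[OF HA_sub] Lof_props(1)[OF I u]] by simp
qed

lemma phi_hom: "phi \<in> hom IGBA (Cl RA)"
  unfolding hom_def
proof (intro CollectI conjI ballI)
  show "phi \<in> carrier IGBA \<rightarrow> carrier (Cl RA)" using phi_carrier by auto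
  fix I1 I2 assume I1: "I1 \<in> carrier IGBA" and I2: "I2 \<in> carrier IGBA"
  obtain u1 where u1: "u1 \<in> U I1" using U_ne[OF I1] by blast
  obtain u2 where u2: "u2 \<in> U I2" using U_ne[OF I2] by blast
  have "phi (I1 \<otimes>\<^bsub>IGBA\<^esub> I2) = HA #>\<^bsub>IGA\<^esub> (Lof u1 I1 \<otimes>\<^bsub>IGA\<^esub> Lof u2 I2)"
    using phi_eq[OF IGBA_m_closed[OF I1 I2] U_mult(1)[OF I1 I2 u1 u2]] U_mult(2)[OF I1 I2 u1 u2] by simp
  also have "\<dots> = (HA #>\<^bsub>IGA\<^esub> Lof u1 I1) <#>\<^bsub>IGA\<^esub> (HA #>\<^bsub>IGA\<^esub> Lof u2 I2)"
    using normal.rcos_sum[OF HA_normal Lof_props(1)[OF I1 u1] Lof_props(1)[OF I2 u2]] by simp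
  finally show "phi (I1 \<otimes>\<^bsub>IGBA\<^esub> I2) = phi I1 \<otimes>\<^bsub>Cl RA\<^esub> phi I2"
    using phi_eq[OF I1 u1] phi_eq[OF I2 u2] by (simp add: ClA_eq FactGroup_def)
qed

end

context setting
begin

lemma HBA_sub: "subgroup HBA IGBA" using b.principal_subgroup[OF subA] .
lemma IGA_group: "group IGA" using comm_group.axioms(2)[OF IGA_comm] .
lemma IGB_group: "group IGB" using comm_group.axioms(2)[OF IGB_comm] .
lemma IGBA_group: "group IGBA" using comm_group.axioms(2)[OF IGBA_comm] .

lemma ClA_one: "\<one>\<^bsub>Cl RA\<^esub> = HA" by (simp add: ClA_eq FactGroup_def)
lemma ClB_one: "\<one>\<^bsub>Cl B\<^esub> = HB" by (simp add: ClB_eq FactGroup_def)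

lemma one_Ap: "\<one>\<^bsub>TB\<^esub> \<in> Ap" using subringE(3)[OF Ap_sub] .
lemma one_cB: "\<one>\<^bsub>TB\<^esub> \<in> cB" using subringE(3)[OF cB_sub] .

lemma scl_self: "v \<in> carrier TB \<Longrightarrow> \<one>\<^bsub>TB\<^esub> \<in> K \<Longrightarrow> v \<in> scl TB v K"
  using tb.sc_mem[of "\<one>\<^bsub>TB\<^esub>" K v] by simp

lemma kernel_phi: "kernel IGBA (Cl RA) phi = HBA"
proof
  show "kernel IGBA (Cl RA) phi \<subseteq> HBA"
  proof
    fix I assume "I \<in> kernel IGBA (Cl RA) phi"
    then have I: "I \<in> carrier IGBA" and pI: "phi I = HA" unfolding kernel_def ClA_one by auto
    obtain u where u: "u \<in> U I" using U_ne[OF I] by blast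
    have uu: "u \<in> Units TB" using u unfolding U_def by auto
    have uc: "u \<in> carrier TB" "inv\<^bsub>TB\<^esub> u \<in> carrier TB" using uu by auto
    obtain J where J: "J \<in> carrier IGBA" "submod_prod B I J = A" using IGBA_inv[OF I] by blast
    have c: "I \<subseteq> carrier B" "J \<subseteq> carrier B" using I J b.Inv_carrier_c by auto
    have ic: "iota ` I \<subseteq> carrier TB" "iota ` J \<subseteq> carrier TB" using c by auto
    have Lu: "Lof u I \<in> carrier IGA" using Lof_props(1)[OF I u] .
    have e: "HA #>\<^bsub>IGA\<^esub> Lof u I = HA" using phi_eq[OF I u] pI by metis
    have "Lof u I \<in> HA" using group.rcos_self[OF IGA_group Lu HA_sub] unfolding e .
    then obtain w0 where w0: "w0 \<in> Units TA" "Lof u I = ta.PI cA w0" using ta.principal_PI by auto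
    have w0c: "w0 \<in> carrier TA" "tau w0 \<in> Units TB" using w0 tauh.hUnits(1) by auto
    have twc: "tau w0 \<in> carrier TB" using w0c(1) tau_closed by auto
    have "scl TB (inv\<^bsub>TB\<^esub> u) (iota ` I) = tau ` ta.PI cA w0" using Lof_props(2)[OF I u] w0 by simp
    also have "\<dots> = scl TB (tau w0) Ap" using tauh.hPI[OF w0c(1) cA_c] tau_cA tb.PI_sc[OF Ap_c twc] by simp
    finally have "scl TB u (scl TB (inv\<^bsub>TB\<^esub> u) (iota ` I)) = scl TB u (scl TB (tau w0) Ap)" by simp
    then have iI: "iota ` I = scl TB (u \<otimes>\<^bsub>TB\<^esub> tau w0) Ap"
      using tb.sc_inv2[OF uu ic(1)] tb.sc_sc[OF uc(1) twc Ap_c] by simp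
    define v where "v = u \<otimes>\<^bsub>TB\<^esub> tau w0"
    have vU: "v \<in> Units TB" unfolding v_def using uu w0c by simp
    have vc: "v \<in> carrier TB" using vU by auto
    have "v \<in> iota ` I" using iI scl_self[OF vc one_Ap] unfolding v_def by simp
    then obtain b0 where b0: "b0 \<in> I" "v = iota b0" by auto
    have b0c: "b0 \<in> carrier B" using b0 c by auto
    have smJ: "R_submod TB Ap (iota ` J)" using iotah.hsubmod[OF b.Inv_carrier_submod[OF J(1)] Ac] .
    have "\<one>\<^bsub>TB\<^esub> \<in> iota ` submod_prod B I J" using J(2) one_Ap by simp
    also have "iota ` submod_prod B I J = submod_prod TB (iota ` I) (iota ` J)" using iotah.hSP[OF c] .
    also have "\<dots> = scl TB v (submod_prod TB Ap (iota ` J))" using iI tb.sc_SP[OF vc Ap_c ic(2)] unfolding v_def by simp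
    also have "submod_prod TB Ap (iota ` J) = iota ` J" using tb.SP_one[OF Ap_sub smJ] .
    finally obtain c0 where c0: "c0 \<in> J" "\<one>\<^bsub>TB\<^esub> = v \<otimes>\<^bsub>TB\<^esub> iota c0" unfolding scl_def by auto
    have c0c: "c0 \<in> carrier B" using c0 c by auto
    have "iota (b0 \<otimes>\<^bsub>B\<^esub> c0) = iota \<one>\<^bsub>B\<^esub>" using c0 b0 b0c c0c by simp
    then have bc: "b0 \<otimes>\<^bsub>B\<^esub> c0 = \<one>\<^bsub>B\<^esub>" using b.emb_inj[of "b0 \<otimes>\<^bsub>B\<^esub> c0" "\<one>\<^bsub>B\<^esub>"] b0c c0c by simp
    have cb: "c0 \<otimes>\<^bsub>B\<^esub> b0 = \<one>\<^bsub>B\<^esub>" using bc b.m_comm[OF b0c c0c] by simp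
    have b0U: "b0 \<in> Units B" unfolding Units_def using b0c c0c bc cb by blast
    have "iota ` I = scl TB (iota b0) (iota ` A)" using iI b0 unfolding v_def by simp
    also have "\<dots> = iota ` scl B b0 A" using iotah.hscl[OF b0c Ac] by simp
    also have "scl B b0 A = b.PI A b0" using b.PI_sc[OF Ac b0c] by simp
    finally have "iota ` I = iota ` b.PI A b0" .
    moreover have "b.PI A b0 \<subseteq> carrier B" using b.PI_submod[OF subA b0c] b.submod_carrier by blast
    ultimately have "I = b.PI A b0" using inj_on_image_eq_iff[OF iota_inj c(1)] by blast
    then show "I \<in> HBA" using b.principal_PI b0U by auto
  qed
next
  show "HBA \<subseteq> kernel IGBA (Cl RA) phi"
  proof
    fix I assume IH: "I \<in> HBA"
    then have I: "I \<in> carrier IGBA" using subgroup.subset[OF HBA_sub] by auto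
    obtain b0 where b0: "b0 \<in> Units B" "I = b.PI A b0" using IH b.principal_PI by auto
    have b0c: "b0 \<in> carrier B" using b0 by auto
    have ib: "iota b0 \<in> Units TB" using iotah.hUnits(1)[OF b0(1)] .
    have ibc: "iota b0 \<in> carrier TB" "inv\<^bsub>TB\<^esub> (iota b0) \<in> carrier TB" using ib by auto
    have iI: "iota ` I = tb.PI Ap (iota b0)" using iotah.hPI[OF b0c Ac] b0(2) by simp
    have "ext' I = tb.PI TAp (iota b0)"
      unfolding ext'_def iI using tb.SP_PI_sub[OF TAp_sub Ap_sub Ap_TAp ibc(1)] .
    then have u: "iota b0 \<in> U I" unfolding U_def using ib by auto
    have pisc: "tb.PI Ap (iota b0) = scl TB (iota b0) Ap" using tb.PI_sc[OF Ap_c ibc(1)] .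
    have "tau ` Lof (iota b0) I = scl TB (inv\<^bsub>TB\<^esub> (iota b0)) (iota ` I)"
      using Lof_props(2)[OF I u] .
    also have "\<dots> = scl TB (inv\<^bsub>TB\<^esub> (iota b0)) (scl TB (iota b0) Ap)" unfolding iI pisc ..
    also have "\<dots> = Ap" using tb.sc_inv[OF ib Ap_c] .
    also have "\<dots> = tau ` cA" using tau_cA by simp
    finally have tl: "tau ` Lof (iota b0) I = tau ` cA" .
    have "Lof (iota b0) I = cA"
      using inj_on_image_eq_iff[OF tau_inj Lof_c cA_c] tl by simp
    moreover have "cA \<in> HA" using HA_PI[of "\<one>\<^bsub>TA\<^esub>"] ta.PI_one[OF cA_sub] by simp
    moreover have "cA \<in> carrier IGA" using calculation(2) subgroup.subset[OF HA_sub] by auto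
    ultimately have "phi I = HA" using phi_eq[OF I u] group.coset_join2[OF IGA_group _ HA_sub] by simp
    then show "I \<in> kernel IGBA (Cl RA) phi" unfolding kernel_def ClA_one using I by simp
  qed
qed

lemma sub_scl_cB:
  assumes "Z \<subseteq> carrier TB"
  shows "Z \<subseteq> submod_prod TB cB Z"
proof
  fix z assume z: "z \<in> Z"
  then have "z = \<one>\<^bsub>TB\<^esub> \<otimes>\<^bsub>TB\<^esub> z" using assms by auto
  then show "z \<in> submod_prod TB cB Z" using tb.SP_mem[OF cB_c assms one_cB z] by simp
qed

lemma image_sub_kernel: "phi ` carrier IGBA \<subseteq> kernel (Cl RA) (Cl B) (Cl_map B A)"
proof
  fix K assume "K \<in> phi ` carrier IGBA"
  then obtain I where I: "I \<in> carrier IGBA" and K: "K = phi I" by auto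
  obtain u where u: "u \<in> U I" using U_ne[OF I] by blast
  have uu: "u \<in> Units TB" using u unfolding U_def by auto
  have uc: "u \<in> carrier TB" "inv\<^bsub>TB\<^esub> u \<in> carrier TB" "inv\<^bsub>TB\<^esub> u \<in> Units TB" using uu by auto
  obtain J where J: "J \<in> carrier IGBA" "submod_prod B I J = A" using IGBA_inv[OF I] by blast
  have c: "I \<subseteq> carrier B" "J \<subseteq> carrier B" using I J b.Inv_carrier_c by auto
  have ic: "iota ` I \<subseteq> carrier TB" "iota ` J \<subseteq> carrier TB" using c by auto
  have icB: "iota ` I \<subseteq> cB" "iota ` J \<subseteq> cB" using c cB_img by auto
  have Lu: "Lof u I \<in> carrier IGA" using Lof_props(1)[OF I u] .
  have one: "\<one>\<^bsub>TB\<^esub> \<in> submod_prod TB (iota ` I) (iota ` J)"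
    using iotah.hSP[OF c] J(2) one_Ap by simp
  have full: "submod_prod TB cB (iota ` I) = cB" using tb.SP_full[OF cB_sub icB one] .
  have "E (Lof u I) = submod_prod TB cB (scl TB (inv\<^bsub>TB\<^esub> u) (iota ` I))"
    unfolding E_def using Lof_props(2)[OF I u] by simp
  also have "\<dots> = submod_prod TB (scl TB (inv\<^bsub>TB\<^esub> u) (iota ` I)) cB"
    using tb.SP_comm[OF cB_c tb.sc_carrier[OF uc(2) ic(1)]] .
  also have "\<dots> = scl TB (inv\<^bsub>TB\<^esub> u) (submod_prod TB (iota ` I) cB)"
    using tb.sc_SP[OF uc(2) ic(1) cB_c] .
  also have "submod_prod TB (iota ` I) cB = cB" using tb.SP_comm[OF ic(1) cB_c] full by simp
  also have "scl TB (inv\<^bsub>TB\<^esub> u) cB = tb.PI cB (inv\<^bsub>TB\<^esub> u)" using tb.PI_sc[OF cB_c uc(2)] by simp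
  finally have EL: "E (Lof u I) = tb.PI cB (inv\<^bsub>TB\<^esub> u)" .
  have inH: "E (Lof u I) \<in> HB" unfolding EL using HB_PI[OF uc(3)] .
  have "Cl_map B A K = psi (Lof u I)" using K phi_eq[OF I u] Cl_map_eq[OF Lu] by simp
  also have "\<dots> = HB" unfolding psi_def
    using group.coset_join2[OF IGB_group E_carrier[OF Lu] HB_sub inH] .
  finally have "Cl_map B A K = \<one>\<^bsub>Cl B\<^esub>" using ClB_one by simp
  moreover have "K \<in> carrier (Cl RA)" using K phi_carrier[OF I] by simp
  ultimately show "K \<in> kernel (Cl RA) (Cl B) (Cl_map B A)" unfolding kernel_def by simp
qed

lemma kernel_sub_image: "kernel (Cl RA) (Cl B) (Cl_map B A) \<subseteq> phi ` carrier IGBA"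
proof
  fix K assume "K \<in> kernel (Cl RA) (Cl B) (Cl_map B A)"
  then have K: "K \<in> carrier (Cl RA)" and CK: "Cl_map B A K = HB" unfolding kernel_def ClB_one by auto
  obtain L where L: "L \<in> carrier IGA" and KL: "K = HA #>\<^bsub>IGA\<^esub> L"
    using K unfolding ClA_eq FactGroup_def RCOSETS_def by auto
  have pL: "HB #>\<^bsub>IGB\<^esub> E L = HB" using CK Cl_map_eq[OF L] KL unfolding psi_def by metis
  have EL: "E L \<in> carrier IGB" using E_carrier[OF L] .
  have "E L \<in> HB" using group.rcos_self[OF IGB_group EL HB_sub] unfolding pL .
  then obtain w where w: "w \<in> Units TB" "E L = tb.PI cB w" using tb.principal_PI by auto
  have wc: "w \<in> carrier TB" "inv\<^bsub>TB\<^esub> w \<in> carrier TB" "inv\<^bsub>TB\<^esub> w \<in> Units TB" using w by auto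
  obtain L' where L': "R_submod TA cA L'" "submod_prod TA L L' = cA" and Ls: "R_submod TA cA L"
    using L unfolding Inv_group_def invertible_ideal_def by auto
  have Lc: "L \<subseteq> carrier TA" "L' \<subseteq> carrier TA" using Ls L' ta.submod_carrier by auto
  have L'G: "L' \<in> carrier IGA"
    using L' Ls ta.SP_comm[OF Lc] unfolding Inv_group_def invertible_ideal_def by auto
  have tc: "tau ` L \<subseteq> carrier TB" "tau ` L' \<subseteq> carrier TB" using tau_img_c Lc by auto
  have EL': "E L' = tb.PI cB (inv\<^bsub>TB\<^esub> w)"
  proof -
    have "submod_prod TB (E L) (E L') = cB" using E_SP[OF Lc] L'(2) E_cA by simp
    then have "E L' = inv\<^bsub>IGB\<^esub> (E L)"
      using tb.Inv_inv_unique[OF cB_sub EL E_carrier[OF L'G]] by simp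
    then show ?thesis using w tb.PI_Inv_inv[OF cB_sub w(1)] by simp
  qed
  define Xs where "Xs = scl TB (inv\<^bsub>TB\<^esub> w) (tau ` L)"
  define Ys where "Ys = scl TB w (tau ` L')"
  have Xsub: "Xs \<subseteq> cB"
  proof -
    have "tau ` L \<subseteq> scl TB w cB" using sub_scl_cB[OF tc(1)] w(2) tb.PI_sc[OF cB_c wc(1)] unfolding E_def by simp
    then have "Xs \<subseteq> scl TB (inv\<^bsub>TB\<^esub> w) (scl TB w cB)" unfolding Xs_def by (rule tb.scl_mono)
    then show ?thesis using tb.sc_inv[OF w(1) cB_c] by simp
  qed
  have Ysub: "Ys \<subseteq> cB"
  proof -
    have "tau ` L' \<subseteq> scl TB (inv\<^bsub>TB\<^esub> w) cB" using sub_scl_cB[OF tc(2)] EL' tb.PI_sc[OF cB_c wc(2)] unfolding E_def by simp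
    then have "Ys \<subseteq> scl TB w (scl TB (inv\<^bsub>TB\<^esub> w) cB)" unfolding Ys_def by (rule tb.scl_mono)
    then show ?thesis using tb.sc_inv2[OF w(1) cB_c] by simp
  qed
  have smX: "R_submod TB (iota ` A) Xs"
    unfolding Xs_def using tb.sc_submod[OF tauh.hsubmod[OF Ls cA_c] wc(2) _] tau_cA Ap_c by simp
  have smY: "R_submod TB (iota ` A) Ys"
    unfolding Ys_def using tb.sc_submod[OF tauh.hsubmod[OF L'(1) cA_c] wc(1) _] tau_cA Ap_c by simp
  define I where "I = {b \<in> carrier B. iota b \<in> Xs}"
  define J where "J = {b \<in> carrier B. iota b \<in> Ys}"
  have preI: "R_submod B A I" "iota ` I = Xs"
    unfolding I_def using iotah.hpre[OF iota_inj Ac smX] Xsub cB_img by auto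
  have preJ: "R_submod B A J" "iota ` J = Ys"
    unfolding J_def using iotah.hpre[OF iota_inj Ac smY] Ysub cB_img by auto
  have IJc: "I \<subseteq> carrier B" "J \<subseteq> carrier B" unfolding I_def J_def by auto
  have "iota ` submod_prod B I J = submod_prod TB Xs Ys" using iotah.hSP[OF IJc] preI preJ by simp
  also have "\<dots> = scl TB (inv\<^bsub>TB\<^esub> w) (submod_prod TB (tau ` L) Ys)"
    unfolding Xs_def using tb.sc_SP[OF wc(2) tc(1) tb.sc_carrier[OF wc(1) tc(2)]] Ys_def by simp
  also have "submod_prod TB (tau ` L) Ys = submod_prod TB Ys (tau ` L)"
    using tb.SP_comm[OF tc(1) tb.sc_carrier[OF wc(1) tc(2)]] Ys_def by simp
  also have "\<dots> = scl TB w (submod_prod TB (tau ` L') (tau ` L))" unfolding Ys_def using tb.sc_SP[OF wc(1) tc(2) tc(1)] .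
  also have "scl TB (inv\<^bsub>TB\<^esub> w) \<dots> = submod_prod TB (tau ` L') (tau ` L)"
    using tb.sc_inv[OF w(1) tb.SP_carrier[OF tc(2) tc(1)]] .
  also have "\<dots> = tau ` submod_prod TA L L'" using tauh.hSP[OF Lc] tb.SP_comm[OF tc] by simp
  also have "\<dots> = iota ` A" using L'(2) tau_cA by simp
  finally have "iota ` submod_prod B I J = iota ` A" .
  then have IJ: "submod_prod B I J = A"
    using inj_on_image_eq_iff[OF iota_inj b.SP_carrier[OF IJc] Ac] by simp
  have IG: "I \<in> carrier IGBA" unfolding Inv_group_def invertible_ideal_def using preI preJ IJ by auto
  have "ext' I = submod_prod TB TAp Xs" unfolding ext'_def using preI by simp
  also have "\<dots> = submod_prod TB Xs TAp" using tb.SP_comm[OF TAp_c tb.sc_carrier[OF wc(2) tc(1)]] Xs_def by simp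
  also have "\<dots> = scl TB (inv\<^bsub>TB\<^esub> w) (submod_prod TB (tau ` L) TAp)"
    unfolding Xs_def using tb.sc_SP[OF wc(2) tc(1) TAp_c] .
  also have "submod_prod TB (tau ` L) TAp = TAp"
  proof -
    have one: "\<one>\<^bsub>TB\<^esub> \<in> submod_prod TB (tau ` L) (tau ` L')"
      using tauh.hSP[OF Lc] L'(2) tau_cA one_Ap by simp
    have "tau ` L \<subseteq> TAp" "tau ` L' \<subseteq> TAp" using Lc by auto
    then show ?thesis using tb.SP_full[OF TAp_sub _ _ one] tb.SP_comm[OF tc(1) TAp_c] by simp
  qed
  also have "scl TB (inv\<^bsub>TB\<^esub> w) TAp = tb.PI TAp (inv\<^bsub>TB\<^esub> w)" using tb.PI_sc[OF TAp_c wc(2)] by simp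
  finally have uI: "inv\<^bsub>TB\<^esub> w \<in> U I" unfolding U_def using wc(3) by simp
  have "Lof (inv\<^bsub>TB\<^esub> w) I = {x \<in> carrier TA. tau x \<in> scl TB w Xs}"
    unfolding Lof_def using preI(2) w(1) by simp
  also have "scl TB w Xs = tau ` L" unfolding Xs_def using tb.sc_inv2[OF w(1) tc(1)] .
  also have "{x \<in> carrier TA. tau x \<in> tau ` L} = L"
  proof
    show "{x \<in> carrier TA. tau x \<in> tau ` L} \<subseteq> L"
    proof
      fix x assume x: "x \<in> {x \<in> carrier TA. tau x \<in> tau ` L}"
      then show "x \<in> L" using inj_on_image_mem_iff[OF tau_inj _ Lc(1), of x] by simp
    qed
    show "L \<subseteq> {x \<in> carrier TA. tau x \<in> tau ` L}" using Lc by auto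
  qed
  finally have "Lof (inv\<^bsub>TB\<^esub> w) I = L" .
  then have "phi I = K" using phi_eq[OF IG uI] KL by simp
  then show "K \<in> phi ` carrier IGBA" using IG by blast
qed

end

lemma (in group_hom) FactGroup_image:
  "(\<lambda>Z. the_elem (h ` Z)) ` carrier (G Mod kernel G H h) = h ` carrier G"
proof -
  have key: "the_elem (h ` (kernel G H h #> g)) = h g" if g: "g \<in> carrier G" for g
  proof -
    have "h ` (kernel G H h #> g) = {h g}"
    proof
      show "h ` (kernel G H h #> g) \<subseteq> {h g}"
      proof
        fix y assume "y \<in> h ` (kernel G H h #> g)"
        then obtain k where k: "k \<in> kernel G H h" "y = h (k \<otimes> g)" unfolding r_coset_def by auto
        have kc: "k \<in> carrier G" "h k = \<one>\<^bsub>H\<^esub>" using k(1) unfolding kernel_def by auto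
        then have "h (k \<otimes> g) = h g" using g by simp
        then show "y \<in> {h g}" using k by simp
      qed
      have "g \<in> kernel G H h #> g" using G.rcos_self[OF g subgroup_kernel] .
      then show "{h g} \<subseteq> h ` (kernel G H h #> g)" by auto
    qed
    then show ?thesis by simp
  qed
  show ?thesis
  proof
    show "(\<lambda>Z. the_elem (h ` Z)) ` carrier (G Mod kernel G H h) \<subseteq> h ` carrier G"
      unfolding FactGroup_def RCOSETS_def using key by auto
    show "h ` carrier G \<subseteq> (\<lambda>Z. the_elem (h ` Z)) ` carrier (G Mod kernel G H h)"
    proof
      fix y assume "y \<in> h ` carrier G"
      then obtain g where g: "g \<in> carrier G" "y = h g" by auto
      then have "y = the_elem (h ` (kernel G H h #> g))" using key by simp
      moreover have "kernel G H h #> g \<in> carrier (G Mod kernel G H h)"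
        unfolding FactGroup_def RCOSETS_def using g by auto
      ultimately show "y \<in> (\<lambda>Z. the_elem (h ` Z)) ` carrier (G Mod kernel G H h)" by blast
    qed
  qed
qed

context setting
begin

lemma final_exact:
  "\<exists>f. f \<in> hom (Cart_group B A) (Cl RA)
       \<and> inj_on f (carrier (Cart_group B A))
       \<and> f ` carrier (Cart_group B A) = kernel (Cl RA) (Cl B) (Cl_map B A)"
proof -
  interpret gh: group_hom IGBA "Cl RA" phi
    by (intro group_hom.intro IGBA_group ClA_group group_hom_axioms.intro phi_hom)
  have CG: "Cart_group B A = IGBA Mod kernel IGBA (Cl RA) phi"
    unfolding Cart_group_def kernel_phi ..
  show ?thesis
    apply (rule exI[of _ "\<lambda>Z. the_elem (phi ` Z)"])
    unfolding CG
    using gh.FactGroup_hom gh.FactGroup_inj_on gh.FactGroup_image image_sub_kernel kernel_sub_image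
    by auto
qed

end

theorem theorem5p3:
  fixes B :: "('a, 'm) ring_scheme" and A :: "'a set"
  assumes "cring B"
    and "subring A B"
    and "reduced (B\<lparr>carrier := A\<rparr>)"
    and "finite (minimal_primes (B\<lparr>carrier := A\<rparr>))"
    and "\<forall>s. nzd (B\<lparr>carrier := A\<rparr>) s \<longrightarrow> nzd B s"
  shows "comm_group (Cart_group B A) \<and> comm_group (Cl (B\<lparr>carrier := A\<rparr>)) \<and> comm_group (Cl B)
    \<and> Cl_map B A \<in> hom (Cl (B\<lparr>carrier := A\<rparr>)) (Cl B)
    \<and> (\<exists>f. f \<in> hom (Cart_group B A) (Cl (B\<lparr>carrier := A\<rparr>))
           \<and> inj_on f (carrier (Cart_group B A))
           \<and> f ` carrier (Cart_group B A) = kernel (Cl (B\<lparr>carrier := A\<rparr>)) (Cl B) (Cl_map B A))"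
proof -
  interpret setting B A by (rule setting.intro[OF assms])
  have 1: "comm_group (Cart_group B A)" using b.Cart_group_comm[OF subA] .
  have 2: "comm_group (Cl RA)" unfolding Cl_def using ta.Cart_group_comm[OF cA_sub] .
  have 3: "comm_group (Cl B)" unfolding Cl_def using tb.Cart_group_comm[OF cB_sub] .
  show ?thesis using 1 2 3 Cl_map_hom final_exact by blast
qed


end
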